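(* Consider the following block-Markov scheme over $k$ blocks of length $N$. Setting: $q_{Z|XY}$ is a channel with inputs $X,Y\in\{0,1\}$ and finite output alphabet $\mathcal Z$; $U,V,X$ are independent binary random variables with distributions $q_U,q_V,q_X$, $Y=\max(U,V)$, $Z$ is the output of $q_{Z|XY}$ on $(X,Y)$, giving a joint distribution $q_{UVXYZ}$, and $q_{U^{1:N}V^{1:N}X^{1:N}Y^{1:N}Z^{1:N}}=\prod_{i=1}^Nq_{UVXYZ}$. Fix $\xi>0$, $\delta_{\mathcal A}(N)=\log(11)\sqrt{\tfrac2N(3+\log N)}$, $\epsilon_1=2(\delta_{\mathcal A}(N)+\xi)$, $r_X=N(H(X|UZ)-\epsilon_1/2)$, $r_U=N(H(U|Z)-\epsilon_1/2)$, $r_V=N(H(V|UZX)-\epsilon_1/2)$. Hash functions $G_X,G_U,G_V$ from $\{0,1\}^N$ to $\{0,1\}^{r_X},\{0,1\}^{r_U},\{0,1\}^{r_V}$ are chosen independently and uniformly at random from two-universal families. Encoders $e^X_N,e^U_N,e^V_N$ map $N(H(X)+\epsilon_1/2)$, $N(H(U)+\epsilon_1/2)$, $N(H(V)+\epsilon_1/2)$ bits, respectively, into $\{0,1\}^N$, and when fed with uniformly distributed inputs their outputs have distributions within variational distance $\delta(N)$ of $q_{X^{1:N}},q_{U^{1:N}},q_{V^{1:N}}$, respectively. Block 1: $\widetilde X_1^{1:N}=e^X_N(E_1)$, $\widetilde U_1^{1:N}=e^U_N(D_1)$, $\widetilde V_1^{1:N}=e^V_N(F_1)$ with $E_1,D_1,F_1$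 uniform inputs. Block $i\in\llbracket2,k\rrbracket$: $\widetilde E_i=G_X(\widetilde X_{i-1}^{1:N})$, $\widetilde D_i=G_U(\widetilde U_{i-1}^{1:N})$, $\widetilde F_i=G_V(\widetilde V_{i-1}^{1:N})$, and $\widetilde X_i^{1:N}=e^X_N(\widetilde E_i\|E_i)$, $\widetilde U_i^{1:N}=e^U_N(\widetilde D_i\|D_i)$, $\widetilde V_i^{1:N}=e^V_N(\widetilde F_i\|F_i)$, where $\|$ is concatenation and $E_i,D_i,F_i$ are uniform bit strings of lengths $N(I(X;UZ)+\epsilon_1)$, $N(I(U;Z)+\epsilon_1)$, $N(I(V;UZX)+\epsilon_1)$. In each block $\widetilde Y_i^{1:N}=\max(\widetilde U_i^{1:N},\widetilde V_i^{1:N})$ componentwise, and $\widetilde Z_i^{1:N}$ is the output of the memoryless channel $q_{Z|XY}$ on $(\widetilde X_i^{1:N},\widetilde Y_i^{1:N})$. All fresh randomness $(E_i,D_i,F_i)_i$, the channel noise in different blocks and the hash choice are mutually independent, and $\widetilde p$ denotes distributions induced by this scheme (including the random choice of hash functions). Let $\delta^{(0)}(N)=2/N+\sqrt7\cdot2^{-N\xi/2}$. Then for every block $i\in\llbracket1,k\rrbracket$, $$\mathbb V\big(\widetilde p_{U_i^{1:N}V_i^{1:N}X_i^{1:N}Y_i^{1:N}Z_i^{1:N}},\,q_{U^{1:N}V^{1:N}X^{1:N}Y^{1:N}Z^{1:N}}\big)\le\delta_i(N),$$ where $\delta_i(N)=\tfrac32(\delta(N)+\delta^{(0)}(N))(3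^i-1)+3^{i+1}\delta(N)$.
   Context: $\mathbb V(p,q)=\sum_x|p(x)-q(x)|$, $\log$ base 2; lengths such as $r_X$ and numbers of bits are assumed to be integers. Two-universal hash families are in the sense of Carter–Wegman. *)

theory Defs
  imports "HOL-Probability.Probability"
begin

definition ent :: "'a pmf \<Rightarrow> real" where
  "ent p = - (\<Sum>x\<in>set_pmf p. pmf p x * log 2 (pmf p x))"

definition vdist :: "'a pmf \<Rightarrow> 'a pmf \<Rightarrow> real" where
  "vdist p q = (\<Sum>\<^sub>\<infinity>x. \<bar>pmf p x - pmf q x\<bar>)"

fun list_pmf :: "'a pmf list \<Rightarrow> 'a list pmf" where
  "list_pmf [] = return_pmf []"
| "list_pmf (p # ps) = do { x \<leftarrow> p; xs \<leftarrow> list_pmf ps; return_pmf (x # xs) }"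

definition iid :: "nat \<Rightarrow> 'a pmf \<Rightarrow> 'a list pmf" where
  "iid n p = list_pmf (replicate n p)"

definition unif_bits :: "nat \<Rightarrow> bool list pmf" where
  "unif_bits n = pmf_of_set {s. length s = n}"

definition channel :: "(bool \<Rightarrow> bool \<Rightarrow> 'z pmf) \<Rightarrow> bool list \<Rightarrow> bool list \<Rightarrow> 'z list pmf" where
  "channel W xs ys = list_pmf (map (\<lambda>(a, b). W a b) (zip xs ys))"

definition two_universal :: "nat \<Rightarrow> nat \<Rightarrow> (bool list \<Rightarrow> bool list) set \<Rightarrow> bool" where
  "two_universal n r H \<longleftrightarrow> finite H \<and> H \<noteq> {} \<and>
     (\<forall>h\<in>H. \<forall>x. length x = n \<longrightarrow> length (h x) = r) \<and>
     (\<forall>x x'. length x = n \<and> length x' = n \<and> x \<noteq> x' \<longrightarrow>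
        real (card {h\<in>H. h x = h x'}) \<le> real (card H) / 2 ^ r)"

text \<open>Bits are booleans (True = 1), so max on bits is disjunction.
  A single-letter sample is the tuple (U, V, X, Y, Z).\<close>
definition q1 :: "(bool \<Rightarrow> bool \<Rightarrow> 'z pmf) \<Rightarrow> bool pmf \<Rightarrow> bool pmf \<Rightarrow> bool pmf
    \<Rightarrow> (bool \<times> bool \<times> bool \<times> bool \<times> 'z) pmf" where
  "q1 W qU qV qX = do { u \<leftarrow> qU; v \<leftarrow> qV; x \<leftarrow> qX; z \<leftarrow> W x (u \<or> v);
                        return_pmf (u, v, x, u \<or> v, z) }"

type_synonym 'z block = "bool list \<times> bool list \<times> bool list \<times> bool list \<times> 'z list"

definition qN :: "nat \<Rightarrow> (bool \<times> bool \<times> bool \<times> bool \<times> 'z) pmf \<Rightarrow> 'z block pmf" where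
  "qN n q = map_pmf (\<lambda>l. (map (\<lambda>(u,v,x,y,z). u) l, map (\<lambda>(u,v,x,y,z). v) l,
                          map (\<lambda>(u,v,x,y,z). x) l, map (\<lambda>(u,v,x,y,z). y) l,
                          map (\<lambda>(u,v,x,y,z). z) l)) (iid n q)"

type_synonym hashes = "(bool list \<Rightarrow> bool list) \<times> (bool list \<Rightarrow> bool list) \<times> (bool list \<Rightarrow> bool list)"

definition finish_block :: "(bool \<Rightarrow> bool \<Rightarrow> 'z pmf) \<Rightarrow> bool list \<Rightarrow> bool list \<Rightarrow> bool list
    \<Rightarrow> 'z block pmf" where
  "finish_block W x u v = (let y = map2 (\<or>) u v in
     do { z \<leftarrow> channel W x y; return_pmf (u, v, x, y, z) })"

definition first_block :: "(bool \<Rightarrow> bool \<Rightarrow> 'z pmf) \<Rightarrow>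
    (bool list \<Rightarrow> bool list) \<Rightarrow> (bool list \<Rightarrow> bool list) \<Rightarrow> (bool list \<Rightarrow> bool list) \<Rightarrow>
    nat \<Rightarrow> nat \<Rightarrow> nat \<Rightarrow> 'z block pmf" where
  "first_block W eX eU eV lX lU lV =
     do { e \<leftarrow> unif_bits lX; d \<leftarrow> unif_bits lU; f \<leftarrow> unif_bits lV;
          finish_block W (eX e) (eU d) (eV f) }"

definition next_block :: "(bool \<Rightarrow> bool \<Rightarrow> 'z pmf) \<Rightarrow>
    (bool list \<Rightarrow> bool list) \<Rightarrow> (bool list \<Rightarrow> bool list) \<Rightarrow> (bool list \<Rightarrow> bool list) \<Rightarrow>
    nat \<Rightarrow> nat \<Rightarrow> nat \<Rightarrow> hashes \<Rightarrow> 'z block \<Rightarrow> 'z block pmf" where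
  "next_block W eX eU eV mX mU mV h b =
     (case h of (gX, gU, gV) \<Rightarrow> case b of (u, v, x, y, z) \<Rightarrow>
       do { e \<leftarrow> unif_bits mX; d \<leftarrow> unif_bits mU; f \<leftarrow> unif_bits mV;
            finish_block W (eX (gX x @ e)) (eU (gU u @ d)) (eV (gV v @ f)) })"

fun scheme :: "(bool \<Rightarrow> bool \<Rightarrow> 'z pmf) \<Rightarrow>
    (bool list \<Rightarrow> bool list) \<Rightarrow> (bool list \<Rightarrow> bool list) \<Rightarrow> (bool list \<Rightarrow> bool list) \<Rightarrow>
    nat \<Rightarrow> nat \<Rightarrow> nat \<Rightarrow> nat \<Rightarrow> nat \<Rightarrow> nat \<Rightarrow>
    (bool list \<Rightarrow> bool list) set \<Rightarrow> (bool list \<Rightarrow> bool list) set \<Rightarrow> (bool list \<Rightarrow> bool list) set \<Rightarrow>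
    nat \<Rightarrow> (hashes \<times> 'z block list) pmf" where
  "scheme W eX eU eV lX lU lV mX mU mV HX HU HV 0 =
     do { gX \<leftarrow> pmf_of_set HX; gU \<leftarrow> pmf_of_set HU; gV \<leftarrow> pmf_of_set HV;
          return_pmf ((gX, gU, gV), []) }"
| "scheme W eX eU eV lX lU lV mX mU mV HX HU HV (Suc n) =
     do { (h, bs) \<leftarrow> scheme W eX eU eV lX lU lV mX mU mV HX HU HV n;
          b \<leftarrow> (if bs = [] then first_block W eX eU eV lX lU lV
                else next_block W eX eU eV mX mU mV h (last bs));
          return_pmf (h, bs @ [b]) }"

end

theory Submission
  imports Defs
begin

lemma integrable_pmf_diff_abs:
  "integrable (count_space UNIV) (\<lambda>x. \<bar>pmf p x - pmf q x\<bar>)"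
  by (intro integrable_abs Bochner_Integration.integrable_diff integrable_pmf)

lemma vdist_integral:
  "vdist p q = (\<integral>x. \<bar>pmf p x - pmf q x\<bar> \<partial>count_space UNIV)"
proof -
  have "Infinite_Set_Sum.abs_summable_on (\<lambda>x. \<bar>pmf p x - pmf q x\<bar>) UNIV"
    unfolding Infinite_Set_Sum.abs_summable_on_def by (rule integrable_pmf_diff_abs)
  then have "infsetsum (\<lambda>x. \<bar>pmf p x - pmf q x\<bar>) UNIV = infsum (\<lambda>x. \<bar>pmf p x - pmf q x\<bar>) UNIV"
    by (rule infsetsum_infsum)
  then show ?thesis unfolding vdist_def infsetsum_def by simp
qed

lemma integral_pmf_density:
  fixes f :: "'a \<Rightarrow> real"
  shows "measure_pmf.expectation p f = (\<integral>x. pmf p x * f x \<partial>count_space UNIV)"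
  unfolding measure_pmf_eq_density by (simp add: integral_density)

lemma integrable_pmf_bounded:
  fixes f :: "'a \<Rightarrow> real"
  assumes "\<And>x. \<bar>f x\<bar> \<le> B"
  shows "integrable (count_space UNIV) (\<lambda>x. pmf p x * f x)"
proof (rule Bochner_Integration.integrable_bound[of _ "\<lambda>x. pmf p x * B"])
  show "integrable (count_space UNIV) (\<lambda>x. pmf p x * B)"
    by (intro integrable_mult_left integrable_pmf)
  show "AE x in count_space UNIV. norm (pmf p x * f x) \<le> norm (pmf p x * B)"
  proof (rule AE_I2)
    fix x
    have "\<bar>f x\<bar> \<le> \<bar>B\<bar>" using assms[of x] by linarith
    then show "norm (pmf p x * f x) \<le> norm (pmf p x * B)"
      by (simp add: abs_mult mult_left_mono)
  qed
qed auto

lemma integral_bind_pmf: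
  fixes f :: "'b \<Rightarrow> real"
  assumes "\<And>x. \<bar>f x\<bar> \<le> B"
  shows "measure_pmf.expectation (bind_pmf p K) f = measure_pmf.expectation p (\<lambda>x. measure_pmf.expectation (K x) f)"
  unfolding measure_pmf_bind
proof (rule integral_bind[where K="count_space UNIV" and B=B and B'=1])
  show "(\<lambda>x. measure_pmf (K x)) \<in> measurable (measure_pmf p) (subprob_algebra (count_space UNIV))"
    by (simp add: measure_pmf_in_subprob_algebra)
  show "finite_measure (measure_pmf p)" by (rule measure_pmf.finite_measure_axioms)
  show "AE x in measure_pmf p. emeasure (measure_pmf (K x)) (space (measure_pmf (K x))) \<le> ennreal 1"
    by (simp add: measure_pmf.emeasure_space_1)
qed (use assms in auto)

lemma vdist_ge:
  fixes f :: "'a \<Rightarrow> real"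
  assumes "\<And>x. \<bar>f x\<bar> \<le> 1"
  shows "measure_pmf.expectation p f - measure_pmf.expectation q f \<le> vdist p q"
proof -
  have ip: "integrable (count_space UNIV) (\<lambda>x. pmf p x * f x)"
   and iq: "integrable (count_space UNIV) (\<lambda>x. pmf q x * f x)"
    using integrable_pmf_bounded assms by blast+
  have "measure_pmf.expectation p f - measure_pmf.expectation q f
     = (\<integral>x. pmf p x * f x - pmf q x * f x \<partial>count_space UNIV)"
    using ip iq by (simp add: integral_pmf_density)
  also have "\<dots> \<le> (\<integral>x. \<bar>pmf p x - pmf q x\<bar> \<partial>count_space UNIV)"
  proof (rule integral_mono)
    show "integrable (count_space UNIV) (\<lambda>x. pmf p x * f x - pmf q x * f x)" using ip iq by simp
    show "integrable (count_space UNIV) (\<lambda>x. \<bar>pmf p x - pmf q x\<bar>)" by (rule integrable_pmf_diff_abs)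
    fix x
    have "pmf p x * f x - pmf q x * f x = (pmf p x - pmf q x) * f x" by (simp add: algebra_simps)
    also have "\<dots> \<le> \<bar>(pmf p x - pmf q x) * f x\<bar>" by simp
    also have "\<dots> \<le> \<bar>pmf p x - pmf q x\<bar>" using assms[of x] by (simp add: abs_mult mult_left_le)
    finally show "pmf p x * f x - pmf q x * f x \<le> \<bar>pmf p x - pmf q x\<bar>" .
  qed
  finally show ?thesis by (simp add: vdist_integral)
qed

lemma vdist_eq_sgn:
  "vdist p q = measure_pmf.expectation p (\<lambda>x. sgn (pmf p x - pmf q x))
             - measure_pmf.expectation q (\<lambda>x. sgn (pmf p x - pmf q x))"
proof -
  let ?s = "\<lambda>x. sgn (pmf p x - pmf q x)"
  have b: "\<And>x. \<bar>?s x\<bar> \<le> 1" by (simp add: abs_sgn_eq)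
  have ip: "integrable (count_space UNIV) (\<lambda>x. pmf p x * ?s x)"
   and iq: "integrable (count_space UNIV) (\<lambda>x. pmf q x * ?s x)"
    using integrable_pmf_bounded[of ?s 1] b by blast+
  have "measure_pmf.expectation p ?s - measure_pmf.expectation q ?s
     = (\<integral>x. pmf p x * ?s x - pmf q x * ?s x \<partial>count_space UNIV)"
    using ip iq by (simp add: integral_pmf_density)
  also have "\<dots> = (\<integral>x. \<bar>pmf p x - pmf q x\<bar> \<partial>count_space UNIV)"
    by (rule Bochner_Integration.integral_cong) (auto simp: sgn_if algebra_simps)
  finally show ?thesis by (simp add: vdist_integral)
qed

lemma vdist_nonneg: "vdist p q \<ge> 0"
  unfolding vdist_integral by simp

lemma vdist_sym: "vdist p q = vdist q p"
  unfolding vdist_def by (simp add: abs_minus_commute)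

lemma vdist_triangle: "vdist p r \<le> vdist p q + vdist q r"
proof -
  let ?s = "\<lambda>x. sgn (pmf p x - pmf r x)"
  have b: "\<And>x. \<bar>?s x\<bar> \<le> 1" by (simp add: abs_sgn_eq)
  have "vdist p r = (measure_pmf.expectation p ?s - measure_pmf.expectation q ?s)
       + (measure_pmf.expectation q ?s - measure_pmf.expectation r ?s)"
    by (simp add: vdist_eq_sgn)
  also have "\<dots> \<le> vdist p q + vdist q r"
    by (intro add_mono vdist_ge b)
  finally show ?thesis .
qed

lemma expectation_bounded_abs:
  fixes f :: "'a \<Rightarrow> real"
  assumes "\<And>x. \<bar>f x\<bar> \<le> 1"
  shows "\<bar>measure_pmf.expectation p f\<bar> \<le> 1"
proof -
  have "\<bar>measure_pmf.expectation p f\<bar> \<le> measure_pmf.expectation p (\<lambda>x. \<bar>f x\<bar>)"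
    by (rule integral_abs_bound)
  also have "\<dots> \<le> measure_pmf.expectation p (\<lambda>x. 1)"
    using assms by (intro integral_mono measure_pmf.integrable_const_bound[where B=1]) auto
  finally show ?thesis by simp
qed

lemma vdist_bind_left: "vdist (bind_pmf p K) (bind_pmf q K) \<le> vdist p q"
proof -
  let ?s = "\<lambda>x. sgn (pmf (bind_pmf p K) x - pmf (bind_pmf q K) x)"
  have b: "\<And>x. \<bar>?s x\<bar> \<le> 1" by (simp add: abs_sgn_eq)
  have e: "\<And>r. measure_pmf.expectation (bind_pmf r K) ?s
        = measure_pmf.expectation r (\<lambda>x. measure_pmf.expectation (K x) ?s)"
    by (rule integral_bind_pmf[where B=1]) (use b in auto)
  show ?thesis
    unfolding vdist_eq_sgn[of "bind_pmf p K"] e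
    by (intro vdist_ge expectation_bounded_abs b)
qed

lemma vdist_map: "vdist (map_pmf f p) (map_pmf f q) \<le> vdist p q"
  unfolding map_pmf_def by (rule vdist_bind_left)

lemma vdist_le_2: "vdist p q \<le> 2"
proof -
  let ?s = "\<lambda>x. sgn (pmf p x - pmf q x)"
  have b: "\<And>x. \<bar>?s x\<bar> \<le> 1" by (simp add: abs_sgn_eq)
  have "\<bar>measure_pmf.expectation p ?s\<bar> \<le> 1" "\<bar>measure_pmf.expectation q ?s\<bar> \<le> 1"
    by (intro expectation_bounded_abs b)+
  then show ?thesis unfolding vdist_eq_sgn[of p] by linarith
qed

lemma vdist_bind_right:
  "vdist (bind_pmf p K) (bind_pmf p L) \<le> measure_pmf.expectation p (\<lambda>x. vdist (K x) (L x))"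
proof -
  let ?s = "\<lambda>x. sgn (pmf (bind_pmf p K) x - pmf (bind_pmf p L) x)"
  have b: "\<And>x. \<bar>?s x\<bar> \<le> 1" by (simp add: abs_sgn_eq)
  have e: "\<And>M. measure_pmf.expectation (bind_pmf p M) ?s
        = measure_pmf.expectation p (\<lambda>x. measure_pmf.expectation (M x) ?s)"
    by (rule integral_bind_pmf[where B=1]) (use b in auto)
  have i: "\<And>M. integrable p (\<lambda>x. measure_pmf.expectation (M x) ?s)"
    by (rule measure_pmf.integrable_const_bound[where B=1]) (auto intro!: expectation_bounded_abs b)
  have "vdist (bind_pmf p K) (bind_pmf p L)
      = measure_pmf.expectation p (\<lambda>x. measure_pmf.expectation (K x) ?s - measure_pmf.expectation (L x) ?s)"
    unfolding vdist_eq_sgn[of "bind_pmf p K"] e using i by simp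
  also have "\<dots> \<le> measure_pmf.expectation p (\<lambda>x. vdist (K x) (L x))"
  proof (rule integral_mono_AE')
    show "AE x in p. measure_pmf.expectation (K x) ?s - measure_pmf.expectation (L x) ?s \<le> vdist (K x) (L x)"
      by (intro AE_I2 vdist_ge b)
    show "AE x in p. 0 \<le> vdist (K x) (L x)" by (simp add: vdist_nonneg)
    show "integrable p (\<lambda>x. vdist (K x) (L x))"
      by (rule measure_pmf.integrable_const_bound[where B=2]) (auto simp: vdist_nonneg vdist_le_2)
  qed
  finally show ?thesis .
qed


lemma vdist_bind_right_const:
  assumes "\<And>x. x \<in> set_pmf p \<Longrightarrow> vdist (K x) (L x) \<le> c"
  shows "vdist (bind_pmf p K) (bind_pmf p L) \<le> c"
proof -
  have "measure_pmf.expectation p (\<lambda>x. vdist (K x) (L x)) \<le> measure_pmf.expectation p (\<lambda>x. c)"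
  proof (rule integral_mono_AE)
    show "integrable p (\<lambda>x. vdist (K x) (L x))"
      by (rule measure_pmf.integrable_const_bound[where B=2]) (auto simp: vdist_nonneg vdist_le_2)
    show "AE x in p. vdist (K x) (L x) \<le> c" using assms by (simp add: AE_measure_pmf_iff)
  qed simp
  then show ?thesis using vdist_bind_right[of p K L] by simp
qed

lemma vdist_bind2:
  "vdist (bind_pmf B (\<lambda>u. bind_pmf C (F u))) (bind_pmf B' (\<lambda>u. bind_pmf C' (F u)))
     \<le> vdist B B' + vdist C C'"
proof -
  have "vdist (bind_pmf B (\<lambda>u. bind_pmf C (F u))) (bind_pmf B' (\<lambda>u. bind_pmf C (F u))) \<le> vdist B B'"
    by (rule vdist_bind_left)
  moreover have "vdist (bind_pmf B' (\<lambda>u. bind_pmf C (F u))) (bind_pmf B' (\<lambda>u. bind_pmf C' (F u))) \<le> vdist C C'"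
    by (rule vdist_bind_right_const) (rule vdist_bind_left)
  ultimately show ?thesis using vdist_triangle order_trans add_mono by (meson add_mono order.trans vdist_triangle)
qed

lemma vdist_bind3:
  "vdist (bind_pmf A (\<lambda>x. bind_pmf B (\<lambda>u. bind_pmf C (F x u))))
         (bind_pmf A' (\<lambda>x. bind_pmf B' (\<lambda>u. bind_pmf C' (F x u))))
     \<le> vdist A A' + (vdist B B' + vdist C C')"
proof -
  have "vdist (bind_pmf A (\<lambda>x. bind_pmf B (\<lambda>u. bind_pmf C (F x u))))
              (bind_pmf A' (\<lambda>x. bind_pmf B (\<lambda>u. bind_pmf C (F x u)))) \<le> vdist A A'"
    by (rule vdist_bind_left)
  moreover have "vdist (bind_pmf A' (\<lambda>x. bind_pmf B (\<lambda>u. bind_pmf C (F x u))))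
       (bind_pmf A' (\<lambda>x. bind_pmf B' (\<lambda>u. bind_pmf C' (F x u)))) \<le> vdist B B' + vdist C C'"
    by (rule vdist_bind_right_const) (rule vdist_bind2)
  ultimately show ?thesis by (meson add_mono order.trans vdist_triangle)
qed

lemma pmf_map_sum:
  assumes "finite D" "set_pmf P \<subseteq> D"
  shows "pmf (map_pmf g P) y = (\<Sum>x\<in>D. if g x = y then pmf P x else 0)"
proof -
  have "pmf (map_pmf g P) y = measure_pmf.expectation P (indicator (g -` {y}))"
    by (simp add: pmf_map)
  also have "\<dots> = (\<Sum>x\<in>D. indicator (g -` {y}) x * pmf P x)"
    by (rule integral_measure_pmf_real) (use assms in auto)
  also have "\<dots> = (\<Sum>x\<in>D. if g x = y then pmf P x else 0)"
    by (rule sum.cong) (auto simp: indicator_def)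
  finally show ?thesis .
qed

lemma sum_sq_map:
  assumes "finite D" "set_pmf P \<subseteq> D" "finite R" "\<And>x. x \<in> D \<Longrightarrow> g x \<in> R"
  shows "(\<Sum>y\<in>R. (pmf (map_pmf g P) y)\<^sup>2)
       = (\<Sum>x\<in>D. \<Sum>x'\<in>D. if g x = g x' then pmf P x * pmf P x' else 0)"
proof -
  have "(\<Sum>y\<in>R. (pmf (map_pmf g P) y)\<^sup>2)
      = (\<Sum>y\<in>R. \<Sum>x\<in>D. \<Sum>x'\<in>D. (if g x = y then pmf P x else 0) * (if g x' = y then pmf P x' else 0))"
    by (simp add: pmf_map_sum[OF assms(1,2)] power2_eq_square sum_product)
  also have "\<dots> = (\<Sum>x\<in>D. \<Sum>x'\<in>D. \<Sum>y\<in>R. (if g x = y then pmf P x else 0) * (if g x' = y then pmf P x' else 0))"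
    by (subst sum.swap) (subst (2) sum.swap, rule refl)
  also have "\<dots> = (\<Sum>x\<in>D. \<Sum>x'\<in>D. if g x = g x' then pmf P x * pmf P x' else 0)"
  proof (intro sum.cong refl)
    fix x x' assume x: "x \<in> D" and x': "x' \<in> D"
    have "(\<Sum>y\<in>R. (if g x = y then pmf P x else 0) * (if g x' = y then pmf P x' else 0))
        = (\<Sum>y\<in>R. if y = g x then (if g x' = g x then pmf P x * pmf P x' else 0) else 0)"
      by (rule sum.cong) auto
    also have "\<dots> = (if g x = g x' then pmf P x * pmf P x' else 0)"
      using assms(3) assms(4)[OF x] by (simp add: sum.delta eq_commute)
    finally show "(\<Sum>y\<in>R. (if g x = y then pmf P x else 0) * (if g x' = y then pmf P x' else 0))
        = (if g x = g x' then pmf P x * pmf P x' else 0)" .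
  qed
  finally show ?thesis .
qed


lemma finite_len: "finite {xs :: bool list. length xs = n}"
  using finite_lists_length_eq[of "UNIV :: bool set" n] by simp

lemma card_len: "card {xs :: bool list. length xs = n} = 2 ^ n"
  using card_lists_length_eq[of "UNIV :: bool set" n] by simp

lemma vdist_finite:
  assumes "finite A" "set_pmf p \<subseteq> A" "set_pmf q \<subseteq> A"
  shows "vdist p q = (\<Sum>x\<in>A. \<bar>pmf p x - pmf q x\<bar>)"
proof -
  have "vdist p q = infsum (\<lambda>x. \<bar>pmf p x - pmf q x\<bar>) A"
    unfolding vdist_def
  proof (rule infsum_cong_neutral)
    fix x assume "x \<in> UNIV - A"
    then have "x \<notin> set_pmf p" "x \<notin> set_pmf q" using assms by auto
    then show "\<bar>pmf p x - pmf q x\<bar> = 0" by (simp add: set_pmf_iff)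
  qed auto
  then show ?thesis using assms(1) by simp
qed

lemma ne_len: "{xs :: bool list. length xs = n} \<noteq> {}"
  by (metis (mono_tags) empty_iff length_replicate mem_Collect_eq)

lemma unif_bits_pmf: "pmf (unif_bits r) y = (if length y = r then 1 / 2 ^ r else 0)"
  unfolding unif_bits_def using finite_len[of r] card_len[of r] ne_len[of r]
  by (subst pmf_of_set) (auto simp: indicator_def)

lemma set_unif_bits: "set_pmf (unif_bits r) = {y. length y = r}"
  unfolding unif_bits_def
proof (rule set_pmf_of_set)
  show "{y :: bool list. length y = r} \<noteq> {}" by (metis (mono_tags) empty_iff length_replicate mem_Collect_eq)
qed (rule finite_len)

lemma lhl_one:
  assumes D: "finite D" "set_pmf P \<subseteq> D" and g: "\<And>x. x \<in> D \<Longrightarrow> length (g x) = r"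
  shows "(vdist (map_pmf g P) (unif_bits r))\<^sup>2
         \<le> 2 ^ r * (\<Sum>y\<in>{y. length y = r}. (pmf (map_pmf g P) y)\<^sup>2) - 1"
proof -
  let ?R = "{y :: bool list. length y = r}"
  let ?a = "\<lambda>y. pmf (map_pmf g P) y"
  have fR: "finite ?R" by (rule finite_len)
  have cR: "real (card ?R) = 2 ^ r" by (simp add: card_len)
  have sm: "set_pmf (map_pmf g P) \<subseteq> ?R" using D g by auto
  have V: "vdist (map_pmf g P) (unif_bits r) = (\<Sum>y\<in>?R. \<bar>?a y - 1 / 2 ^ r\<bar>)"
    by (subst vdist_finite[OF fR sm]) (auto simp: set_unif_bits unif_bits_pmf intro!: sum.cong)
  have "(\<Sum>y\<in>?R. \<bar>?a y - 1 / 2 ^ r\<bar> * 1)\<^sup>2 \<le> (\<Sum>y\<in>?R. \<bar>?a y - 1 / 2 ^ r\<bar>\<^sup>2) * (\<Sum>y\<in>?R. 1\<^sup>2)"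
    by (rule Cauchy_Schwarz_ineq_sum)
  also have "\<dots> = 2 ^ r * (\<Sum>y\<in>?R. (?a y)\<^sup>2 - 2 * (1 / 2 ^ r) * ?a y + (1 / 2 ^ r)\<^sup>2)"
    using cR by (simp add: power2_diff algebra_simps)
  also have "\<dots> = 2 ^ r * ((\<Sum>y\<in>?R. (?a y)\<^sup>2) - 2 * (1 / 2 ^ r) * (\<Sum>y\<in>?R. ?a y) + card ?R * (1 / 2 ^ r)\<^sup>2)"
    by (simp add: sum.distrib sum_subtractf sum_distrib_left)
  also have "(\<Sum>y\<in>?R. ?a y) = 1" by (rule sum_pmf_eq_1[OF fR sm])
  also have "2 ^ r * ((\<Sum>y\<in>?R. (?a y)\<^sup>2) - 2 * (1 / 2 ^ r) * 1 + card ?R * (1 / 2 ^ r)\<^sup>2)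
        = 2 ^ r * (\<Sum>y\<in>?R. (?a y)\<^sup>2) - 1"
    using cR by (simp add: power2_eq_square field_simps)
  finally show ?thesis unfolding V by simp
qed

lemma lhl:
  assumes tu: "two_universal N r H" and sup: "set_pmf P \<subseteq> {x. length x = N}"
      and m: "\<And>x. x \<in> {x. length x = N} \<Longrightarrow> pmf P x \<le> m"
  shows "measure_pmf.expectation (pmf_of_set H) (\<lambda>g. vdist (map_pmf g P) (unif_bits r)) \<le> sqrt (2 ^ r * m)"
proof -
  let ?D = "{x :: bool list. length x = N}"
  let ?R = "{y :: bool list. length y = r}"
  let ?a = "\<lambda>g y. pmf (map_pmf g P) y"
  let ?V = "\<lambda>g. vdist (map_pmf g P) (unif_bits r)"
  let ?K = "real (card H)"
  let ?M = "(2::real) ^ r"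
  have fD: "finite ?D" and fR: "finite ?R" by (rule finite_len)+
  have fH: "finite H" and neH: "H \<noteq> {}" and lenH: "\<And>h x. h \<in> H \<Longrightarrow> length x = N \<Longrightarrow> length (h x) = r"
    and coll: "\<And>x x'. length x = N \<Longrightarrow> length x' = N \<Longrightarrow> x \<noteq> x' \<Longrightarrow> real (card {h\<in>H. h x = h x'}) \<le> ?K / ?M"
    using tu unfolding two_universal_def by auto
  have Kpos: "?K > 0" using fH neH by (simp add: card_gt_0_iff)
  have Pnn: "\<And>x. pmf P x \<ge> 0" by simp
  have sum1: "(\<Sum>x\<in>?D. pmf P x) = 1" by (rule sum_pmf_eq_1[OF fD sup])
  have col: "(\<Sum>x\<in>?D. (pmf P x)\<^sup>2) \<le> m"
  proof -
    have "(\<Sum>x\<in>?D. (pmf P x)\<^sup>2) \<le> (\<Sum>x\<in>?D. m * pmf P x)"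
      by (rule sum_mono) (use m in \<open>auto simp: power2_eq_square intro!: mult_right_mono\<close>)
    also have "\<dots> = m" by (simp add: sum_distrib_left[symmetric] sum1)
    finally show ?thesis .
  qed
  have S: "(\<Sum>g\<in>H. \<Sum>y\<in>?R. (?a g y)\<^sup>2) \<le> ?K * ((\<Sum>x\<in>?D. (pmf P x)\<^sup>2) + 1 / ?M)"
  proof -
    have "(\<Sum>g\<in>H. \<Sum>y\<in>?R. (?a g y)\<^sup>2)
        = (\<Sum>g\<in>H. \<Sum>x\<in>?D. \<Sum>x'\<in>?D. if g x = g x' then pmf P x * pmf P x' else 0)"
      by (rule sum.cong[OF refl], rule sum_sq_map[OF fD sup fR]) (use lenH in auto)
    also have "\<dots> = (\<Sum>x\<in>?D. \<Sum>x'\<in>?D. \<Sum>g\<in>H. if g x = g x' then pmf P x * pmf P x' else 0)"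
      by (subst sum.swap) (subst (2) sum.swap, rule refl)
    also have "\<dots> = (\<Sum>x\<in>?D. \<Sum>x'\<in>?D. pmf P x * pmf P x' * real (card {g\<in>H. g x = g x'}))"
    proof (intro sum.cong refl)
      fix x x'
      show "(\<Sum>g\<in>H. if g x = g x' then pmf P x * pmf P x' else 0) = pmf P x * pmf P x' * real (card {g\<in>H. g x = g x'})"
        using fH by (simp add: sum.inter_filter[symmetric])
    qed
    also have "\<dots> \<le> (\<Sum>x\<in>?D. \<Sum>x'\<in>?D. pmf P x * pmf P x' * (?K * ((if x = x' then 1 else 0) + 1 / ?M)))"
    proof (intro sum_mono mult_left_mono)
      fix x x' assume x: "x \<in> ?D" and x': "x' \<in> ?D"
      show "real (card {g\<in>H. g x = g x'}) \<le> ?K * ((if x = x' then 1 else 0) + 1 / ?M)"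
      proof (cases "x = x'")
        case True
        have "card {g\<in>H. g x = g x'} \<le> card H" using fH by (intro card_mono) auto
        moreover have "?K \<le> ?K * (1 + 1 / ?M)" using Kpos by simp
        ultimately show ?thesis using True by simp
      next
        case False then show ?thesis using coll[of x x'] x x' by simp
      qed
    qed simp
    also have "\<dots> = (\<Sum>x\<in>?D. \<Sum>x'\<in>?D. ?K * (if x = x' then pmf P x * pmf P x' else 0) + (?K / ?M) * (pmf P x * pmf P x'))"
      by (intro sum.cong refl) (simp add: algebra_simps)
    also have "\<dots> = ?K * ((\<Sum>x\<in>?D. \<Sum>x'\<in>?D. (if x = x' then pmf P x * pmf P x' else 0))
                        + (1 / ?M) * ((\<Sum>x\<in>?D. pmf P x) * (\<Sum>x'\<in>?D. pmf P x')))"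
      by (simp add: sum.distrib sum_distrib_left sum_product algebra_simps)
    also have "\<dots> = ?K * ((\<Sum>x\<in>?D. (pmf P x)\<^sup>2) + 1 / ?M)"
      using fD by (simp add: sum1 power2_eq_square)
    finally show ?thesis .
  qed
  have V2: "(\<Sum>g\<in>H. (?V g)\<^sup>2) \<le> ?K * (?M * m)"
  proof -
    have "(\<Sum>g\<in>H. (?V g)\<^sup>2) \<le> (\<Sum>g\<in>H. ?M * (\<Sum>y\<in>?R. (?a g y)\<^sup>2) - 1)"
      by (rule sum_mono, rule lhl_one[OF fD sup]) (use lenH in auto)
    also have "\<dots> = ?M * (\<Sum>g\<in>H. \<Sum>y\<in>?R. (?a g y)\<^sup>2) - ?K"
      by (simp add: sum_subtractf sum_distrib_left)
    also have "\<dots> \<le> ?M * (?K * ((\<Sum>x\<in>?D. (pmf P x)\<^sup>2) + 1 / ?M)) - ?K"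
      using S by (intro diff_right_mono mult_left_mono) auto
    also have "\<dots> = ?K * (?M * (\<Sum>x\<in>?D. (pmf P x)\<^sup>2))"
      by (simp add: field_simps)
    also have "\<dots> \<le> ?K * (?M * m)"
      using col Kpos by (intro mult_left_mono) auto
    finally show ?thesis .
  qed
  have "(\<Sum>g\<in>H. ?V g * 1)\<^sup>2 \<le> (\<Sum>g\<in>H. (?V g)\<^sup>2) * (\<Sum>g\<in>H. 1\<^sup>2)"
    by (rule Cauchy_Schwarz_ineq_sum)
  also have "\<dots> \<le> ?K * (?M * m) * ?K"
    using V2 Kpos by (simp add: mult_right_mono)
  finally have sq: "(\<Sum>g\<in>H. ?V g)\<^sup>2 \<le> ?K\<^sup>2 * (?M * m)" by (simp add: power2_eq_square algebra_simps)
  have Mm: "?M * m \<ge> 0"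
  proof -
    have "0 \<le> (\<Sum>g\<in>H. ?V g)\<^sup>2" by simp
    then have "0 \<le> ?K\<^sup>2 * (?M * m)" using sq by linarith
    then show ?thesis using Kpos by (simp add: zero_le_mult_iff)
  qed
  have "(\<Sum>g\<in>H. ?V g) \<le> sqrt (?K\<^sup>2 * (?M * m))"
    using sq by (intro real_le_rsqrt) auto
  also have "\<dots> = ?K * sqrt (?M * m)" using Kpos by (simp add: real_sqrt_mult)
  finally have "(\<Sum>g\<in>H. ?V g) / ?K \<le> sqrt (?M * m)" using Kpos by (simp add: divide_le_eq mult.commute)
  then show ?thesis by (simp add: integral_pmf_of_set[OF neH fH])
qed

lemma exp_neg_quad_upper:
  fixes y :: real assumes "y \<ge> 0"
  shows "exp (- y) \<le> 1 - y + y\<^sup>2 / 2"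
proof -
  let ?f = "\<lambda>t::real. 1 - t + t\<^sup>2 / 2 - exp (- t)"
  have "?f 0 \<le> ?f y"
  proof (rule DERIV_nonneg_imp_nondecreasing[OF assms])
    fix t :: real assume "0 \<le> t" "t \<le> y"
    have "(?f has_real_derivative (- 1 + t + exp (- t))) (at t)"
      by (auto intro!: derivative_eq_intros simp: power2_eq_square)
    moreover have "- 1 + t + exp (- t) \<ge> 0" using exp_ge_add_one_self[of "- t"] by linarith
    ultimately show "\<exists>d. (?f has_real_derivative d) (at t) \<and> 0 \<le> d" by blast
  qed
  then show ?thesis by simp
qed

lemma exp_quad_lower:
  fixes u :: real assumes "u \<ge> 0"
  shows "1 + u + u\<^sup>2 / 2 \<le> exp u"
proof -
  let ?f = "\<lambda>t::real. exp t - (1 + t + t\<^sup>2 / 2)"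
  have "?f 0 \<le> ?f u"
  proof (rule DERIV_nonneg_imp_nondecreasing[OF assms])
    fix t :: real assume "0 \<le> t" "t \<le> u"
    have "(?f has_real_derivative (exp t - (1 + t))) (at t)"
      by (auto intro!: derivative_eq_intros simp: power2_eq_square)
    moreover have "exp t - (1 + t) \<ge> 0" using exp_ge_add_one_self[of t] by linarith
    ultimately show "\<exists>d. (?f has_real_derivative d) (at t) \<and> 0 \<le> d" by blast
  qed
  then show ?thesis by simp
qed

lemma sq_le_exp:
  fixes t :: real assumes "t \<ge> 0"
  shows "t\<^sup>2 \<le> exp t"
proof -
  have "1 + t/2 + (t/2)\<^sup>2 / 2 \<le> exp (t/2)" using assms by (intro exp_quad_lower) auto
  moreover have "t \<le> 1 + t/2 + (t/2)\<^sup>2 / 2"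
  proof -
    have "0 \<le> (t/2 - 1)\<^sup>2 / 2 + 1/2" by simp
    then show ?thesis by (simp add: power2_eq_square field_simps)
  qed
  ultimately have "t \<le> exp (t/2)" by linarith
  then have "t\<^sup>2 \<le> (exp (t/2))\<^sup>2" using assms by (intro power_mono) auto
  also have "\<dots> = exp t" by (simp add: power2_eq_square exp_add[symmetric])
  finally show ?thesis .
qed

lemma p_ln_sq_le:
  fixes q :: real assumes "0 < q" "q \<le> 1"
  shows "q * (ln q)\<^sup>2 \<le> 1"
proof -
  define t where "t = - ln q"
  have t: "t \<ge> 0" using assms by (simp add: t_def)
  have q: "q = exp (- t)" using assms by (simp add: t_def)
  have lnq: "ln q = - t" by (simp add: t_def)
  have "q * (ln q)\<^sup>2 = q * t\<^sup>2" by (simp add: lnq)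
  also have "\<dots> = t\<^sup>2 * exp (- t)" by (subst q) simp
  also have "\<dots> \<le> exp t * exp (- t)" using sq_le_exp[OF t] by (intro mult_right_mono) auto
  also have "\<dots> = 1" by (simp add: exp_minus)
  finally show ?thesis .
qed

lemma letter_bound:
  fixes q :: real and s :: real assumes "0 \<le> q" "q \<le> 1" "s \<ge> 0"
  shows "q powr (1 + s) \<le> q + s * (q * ln q) + s\<^sup>2 / 2"
proof (cases "q = 0")
  case True then show ?thesis using assms by simp
next
  case False
  then have qp: "q > 0" using assms by simp
  define l where "l = - ln q"
  have l: "l \<ge> 0" using assms qp by (simp add: l_def)
  have e1: "q powr (1 + s) = q * q powr s" using qp by (simp add: powr_add)
  have e2: "q powr s = exp (- (s * l))" using qp by (simp add: powr_def l_def)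
  have "q powr (1 + s) = q * exp (- (s * l))" using e1 e2 by simp
  also have "\<dots> \<le> q * (1 - s * l + (s * l)\<^sup>2 / 2)"
    using qp l assms by (intro mult_left_mono exp_neg_quad_upper) auto
  also have "\<dots> = q - s * (q * l) + s\<^sup>2 / 2 * (q * l\<^sup>2)" by (simp add: power2_eq_square algebra_simps)
  also have "q * l\<^sup>2 \<le> 1" using p_ln_sq_le[OF qp assms(2)] by (simp add: l_def)
  then have "s\<^sup>2 / 2 * (q * l\<^sup>2) \<le> s\<^sup>2 / 2" by (simp add: mult_left_le)
  then have "q - s * (q * l) + s\<^sup>2 / 2 * (q * l\<^sup>2) \<le> q - s * (q * l) + s\<^sup>2 / 2" by linarith
  finally show ?thesis by (simp add: l_def)
qed

definition Hn :: "bool pmf \<Rightarrow> real" where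
  "Hn p = - (\<Sum>b\<in>UNIV. pmf p b * ln (pmf p b))"

lemma ent_Hn: "ent p * ln 2 = Hn p"
proof -
  have "ent p = - (\<Sum>b\<in>UNIV. pmf p b * log 2 (pmf p b))"
    unfolding ent_def
    by (intro arg_cong[where f=uminus] sum.mono_neutral_left) (auto simp: set_pmf_iff)
  then show ?thesis by (simp add: Hn_def log_def sum_divide_distrib[symmetric])
qed

lemma letter_sum:
  fixes s :: real assumes "s \<ge> 0"
  shows "(\<Sum>b\<in>UNIV. pmf p b powr (1 + s)) \<le> exp (- s * Hn p + s\<^sup>2)"
proof -
  have "(\<Sum>b\<in>UNIV. pmf p b powr (1 + s)) \<le> (\<Sum>b\<in>UNIV. pmf p b + s * (pmf p b * ln (pmf p b)) + s\<^sup>2 / 2)"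
    by (intro sum_mono letter_bound) (auto simp: pmf_le_1 assms)
  also have "\<dots> = (\<Sum>b\<in>UNIV. pmf p b) - s * Hn p + s\<^sup>2"
    by (simp add: Hn_def sum.distrib sum_distrib_left UNIV_bool algebra_simps)
  also have "(\<Sum>b\<in>UNIV. pmf p b) = 1" by (rule sum_pmf_eq_1) auto
  also have "1 - s * Hn p + s\<^sup>2 \<le> exp (- s * Hn p + s\<^sup>2)"
    using exp_ge_add_one_self[of "- s * Hn p + s\<^sup>2"] by (simp add: algebra_simps)
  finally show ?thesis .
qed


lemma iid_0: "iid 0 p = return_pmf []"
  by (simp add: iid_def)

lemma iid_Suc: "iid (Suc n) p = map_pmf (\<lambda>(x, xs). x # xs) (pair_pmf p (iid n p))"
  by (simp add: iid_def pair_pmf_def map_bind_pmf)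

lemma pmf_iid: "pmf (iid n p) xs = (if length xs = n then prod_list (map (pmf p) xs) else 0)"
proof (induction n arbitrary: xs)
  case 0
  then show ?case by (simp add: iid_0 pmf_return)
next
  case (Suc n)
  have inj: "inj (\<lambda>(x :: 'a, xs). x # xs)" by (auto simp: inj_on_def)
  show ?case
  proof (cases xs)
    case Nil
    have "pmf (iid (Suc n) p) [] = measure (pair_pmf p (iid n p)) ((\<lambda>(x, xs). x # xs) -` {[]})"
      by (simp add: iid_Suc pmf_map)
    also have "(\<lambda>(x :: 'a, xs). x # xs) -` {[]} = {}" by auto
    finally show ?thesis using Nil by simp
  next
    case (Cons y ys)
    have "pmf (iid (Suc n) p) (y # ys) = pmf (pair_pmf p (iid n p)) (y, ys)"
      unfolding iid_Suc using pmf_map_inj'[OF inj, of _ "(y, ys)"] by simp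
    also have "\<dots> = pmf p y * pmf (iid n p) ys" by (rule pmf_pair)
    finally show ?thesis using Cons Suc.IH[of ys] by simp
  qed
qed

lemma set_iid: "set_pmf (iid n p) \<subseteq> {xs. length xs = n}"
  by (auto simp: set_pmf_iff pmf_iid split: if_splits)

lemma prod_list_powr:
  fixes f :: "'a \<Rightarrow> real"
  assumes "\<And>x. f x \<ge> 0"
  shows "prod_list (map f xs) powr a = prod_list (map (\<lambda>x. f x powr a) xs)"
proof (induction xs)
  case Nil then show ?case by simp
next
  case (Cons x xs)
  have "prod_list (map f xs) \<ge> 0" by (induction xs) (simp_all add: assms)
  then show ?case using Cons assms by (simp add: powr_mult)
qed

lemma len_Suc_image: "{xs :: 'a list. length xs = Suc n} = (\<lambda>(b, xs). b # xs) ` (UNIV \<times> {xs. length xs = n})"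
  by (auto simp: length_Suc_conv image_iff)

lemma sum_len_prod:
  fixes f :: "bool \<Rightarrow> real"
  shows "(\<Sum>xs\<in>{xs :: bool list. length xs = n}. prod_list (map f xs)) = (\<Sum>b\<in>UNIV. f b) ^ n"
proof (induction n)
  case 0 then show ?case by simp
next
  case (Suc n)
  have inj: "inj_on (\<lambda>(b :: bool, xs). b # xs) (UNIV \<times> {xs. length xs = n})" by (auto simp: inj_on_def)
  have "(\<Sum>xs\<in>{xs :: bool list. length xs = Suc n}. prod_list (map f xs))
      = (\<Sum>(b, xs)\<in>UNIV \<times> {xs :: bool list. length xs = n}. f b * prod_list (map f xs))"
    unfolding len_Suc_image by (subst sum.reindex[OF inj]) (simp add: case_prod_beta)
  also have "\<dots> = (\<Sum>b\<in>UNIV. \<Sum>xs\<in>{xs :: bool list. length xs = n}. f b * prod_list (map f xs))"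
    by (rule sum.cartesian_product[symmetric])
  also have "\<dots> = (\<Sum>b\<in>UNIV. f b) * (\<Sum>xs\<in>{xs :: bool list. length xs = n}. prod_list (map f xs))"
    by (simp add: sum_product)
  finally show ?case using Suc by simp
qed

lemma tail_sum:
  fixes p :: "bool pmf" and \<tau> s :: real
  assumes "\<tau> > 0" "s > 0"
  shows "(\<Sum>x\<in>{x. length x = N \<and> pmf (iid N p) x > \<tau>}. pmf (iid N p) x)
         \<le> \<tau> powr (- s) * (\<Sum>b\<in>UNIV. pmf p b powr (1 + s)) ^ N"
proof -
  let ?Q = "iid N p"
  let ?D = "{x :: bool list. length x = N}"
  have fD: "finite ?D" by (rule finite_len)
  have "(\<Sum>x\<in>{x. length x = N \<and> pmf ?Q x > \<tau>}. pmf ?Q x)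
      \<le> (\<Sum>x\<in>{x. length x = N \<and> pmf ?Q x > \<tau>}. \<tau> powr (- s) * pmf ?Q x powr (1 + s))"
  proof (rule sum_mono)
    fix x assume "x \<in> {x. length x = N \<and> pmf ?Q x > \<tau>}"
    then have gt: "pmf ?Q x > \<tau>" by simp
    then have qp: "pmf ?Q x > 0" using assms by linarith
    have "1 \<le> (pmf ?Q x / \<tau>) powr s" using gt assms by (intro ge_one_powr_ge_zero) auto
    then have "pmf ?Q x \<le> pmf ?Q x * (pmf ?Q x / \<tau>) powr s" using qp by simp
    also have "\<dots> = \<tau> powr (- s) * pmf ?Q x powr (1 + s)"
      using qp assms by (simp add: powr_divide powr_add powr_minus field_simps)
    finally show "pmf ?Q x \<le> \<tau> powr (- s) * pmf ?Q x powr (1 + s)" .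
  qed
  also have "\<dots> \<le> (\<Sum>x\<in>?D. \<tau> powr (- s) * pmf ?Q x powr (1 + s))"
    by (rule sum_mono2[OF fD]) auto
  also have "\<dots> = \<tau> powr (- s) * (\<Sum>x\<in>?D. prod_list (map (\<lambda>b. pmf p b powr (1 + s)) x))"
    by (simp add: sum_distrib_left pmf_iid prod_list_powr)
  also have "\<dots> = \<tau> powr (- s) * (\<Sum>b\<in>UNIV. pmf p b powr (1 + s)) ^ N"
    by (simp add: sum_len_prod)
  finally show ?thesis .
qed


lemma ln2_le_1: "ln (2::real) \<le> 1"
proof -
  have "(2::real) \<le> exp 1" using exp_ge_add_one_self[of 1] by simp
  then have "ln (2::real) \<le> ln (exp 1)" by (subst ln_le_cancel_iff) auto
  then show ?thesis by simp
qed

lemma ln11_ge_2: "ln (11::real) \<ge> 2"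
proof -
  have "exp (2::real) = exp 1 * exp 1" by (simp add: exp_add[symmetric])
  also have "\<dots> \<le> 3 * 3" using exp_le by (intro mult_mono) auto
  finally have "exp (2::real) \<le> 11" by simp
  then have "ln (exp (2::real)) \<le> ln 11" by (subst ln_le_cancel_iff) auto
  then show ?thesis by simp
qed

lemma sqrt_2_powr: "sqrt (2 powr x) = 2 powr (x / 2)"
proof -
  have "2 powr x = (2 powr (x / 2))\<^sup>2"
    by (simp add: power2_eq_square powr_add[symmetric])
  then show ?thesis by simp
qed

lemma tail_exp:
  fixes p :: "bool pmf" and N :: nat and \<delta>A :: real
  defines "\<tau> \<equiv> 2 powr (- (real N * (ent p - \<delta>A)))"
  assumes dpos: "\<delta>A > 0"
  shows "(\<Sum>x\<in>{x. length x = N \<and> pmf (iid N p) x > \<tau>}. pmf (iid N p) x)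
         \<le> exp (- (real N * (\<delta>A * ln 2 / 2)\<^sup>2))"
proof -
  define s where "s = \<delta>A * ln 2 / 2"
  have spos: "s > 0" using dpos by (simp add: s_def)
  have taup: "\<tau> > 0" by (simp add: \<tau>_def)
  have "(\<Sum>x\<in>{x. length x = N \<and> pmf (iid N p) x > \<tau>}. pmf (iid N p) x)
      \<le> \<tau> powr (- s) * (\<Sum>b\<in>UNIV. pmf p b powr (1 + s)) ^ N"
    by (rule tail_sum[OF taup spos])
  also have "\<dots> \<le> \<tau> powr (- s) * exp (- s * Hn p + s\<^sup>2) ^ N"
    by (intro mult_left_mono power_mono letter_sum) (use spos in \<open>auto intro: sum_nonneg\<close>)
  also have "\<tau> powr (- s) = exp (s * (real N * (ent p - \<delta>A)) * ln 2)"
    by (simp add: \<tau>_def powr_powr powr_def)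
  also have "exp (- s * Hn p + s\<^sup>2) ^ N = exp (real N * (- s * Hn p + s\<^sup>2))"
    by (rule exp_of_nat_mult[symmetric])
  also have "exp (s * (real N * (ent p - \<delta>A)) * ln 2) * exp (real N * (- s * Hn p + s\<^sup>2))
      = exp (s * (real N * (ent p - \<delta>A)) * ln 2 + real N * (- s * Hn p + s\<^sup>2))"
    by (simp add: exp_add)
  also have "s * (real N * (ent p - \<delta>A)) * ln 2 + real N * (- s * Hn p + s\<^sup>2) = - (real N * s\<^sup>2)"
    unfolding ent_Hn[of p, symmetric] by (simp add: s_def power2_eq_square field_simps)
  finally show ?thesis by (simp add: s_def)
qed

lemma exponent_bound:
  fixes N :: nat
  assumes N: "N \<ge> 1"
  defines "\<delta>A \<equiv> log 2 11 * sqrt (2 / real N * (3 + log 2 (real N)))"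
  shows "\<delta>A > 0" and "real N * (\<delta>A * ln 2 / 2)\<^sup>2 \<ge> 2 * (3 + log 2 (real N))"
proof -
  have lN: "log 2 (real N) \<ge> 0" using N by simp
  have a0: "3 + log 2 (real N) > 0" using lN by linarith
  have a: "2 / real N * (3 + log 2 (real N)) > 0" using N a0 by (intro mult_pos_pos) auto
  have l11: "log 2 11 > 0" by simp
  show "\<delta>A > 0" unfolding \<delta>A_def using a l11 by simp
  have "(\<delta>A * ln 2)\<^sup>2 = (log 2 11 * ln 2)\<^sup>2 * (2 / real N * (3 + log 2 (real N)))"
    unfolding \<delta>A_def using a by (simp add: power_mult_distrib algebra_simps)
  also have "log 2 11 * ln 2 = ln 11" by (simp add: log_def)
  finally have e: "real N * (\<delta>A * ln 2 / 2)\<^sup>2 = (ln 11)\<^sup>2 / 2 * (3 + log 2 (real N))"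
    using N by (simp add: power_divide field_simps)
  have "(ln (11::real))\<^sup>2 \<ge> 2\<^sup>2" using ln11_ge_2 by (intro power_mono) auto
  then have "(ln (11::real))\<^sup>2 / 2 \<ge> 2" by simp
  then show "real N * (\<delta>A * ln 2 / 2)\<^sup>2 \<ge> 2 * (3 + log 2 (real N))"
    unfolding e using lN by (intro mult_right_mono) auto
qed

lemma eps_small:
  fixes N :: nat assumes N: "N \<ge> 1"
  shows "exp (- (2 * (3 + log 2 (real N)))) \<le> 1 / real N"
    and "exp (- (2 * (3 + log 2 (real N)))) \<le> 1 / 2"
proof -
  have lN0: "log 2 (real N) \<ge> 0" using N by simp
  have lN: "log 2 (real N) \<ge> ln (real N)"
  proof -
    have "ln (real N) \<ge> 0" using N by simp
    then have "ln (real N) * ln 2 \<le> ln (real N) * 1" using ln2_le_1 by (intro mult_left_mono) auto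
    then show ?thesis by (simp add: log_def field_simps)
  qed
  have ineq: "- (2 * (3 + log 2 (real N))) \<le> - ln (real N)" using lN lN0 by simp
  have "exp (- (2 * (3 + log 2 (real N)))) \<le> exp (- ln (real N))"
    using ineq by (simp only: exp_le_cancel_iff)
  also have "\<dots> = 1 / real N" using N by (simp add: exp_minus exp_ln divide_inverse)
  finally show "exp (- (2 * (3 + log 2 (real N)))) \<le> 1 / real N" .
  have ineq2: "- (2 * (3 + log 2 (real N))) \<le> - 1" using lN0 by simp
  have "exp (- (2 * (3 + log 2 (real N)))) \<le> exp (- 1)"
    using ineq2 by (simp only: exp_le_cancel_iff)
  also have "exp (- 1) \<le> (1::real) / 2"
  proof -
    have "(2::real) \<le> exp 1" using exp_ge_add_one_self[of 1] by simp
    then show ?thesis by (simp add: exp_minus field_simps)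
  qed
  finally show "exp (- (2 * (3 + log 2 (real N)))) \<le> 1 / 2" .
qed


lemma hash_const:
  fixes p :: "bool pmf" and H :: "(bool list \<Rightarrow> bool list) set" and N r :: nat and \<xi> :: real
  defines "\<delta>A \<equiv> log 2 11 * sqrt (2 / real N * (3 + log 2 (real N)))"
  assumes tu: "two_universal N r H" and N: "N \<ge> 1" and \<xi>: "\<xi> > 0"
      and r: "real r \<le> real N * (ent p - \<delta>A - \<xi>)"
  shows "measure_pmf.expectation (pmf_of_set H) (\<lambda>g. vdist (map_pmf g (iid N p)) (unif_bits r))
         \<le> 2 / real N + sqrt 7 * 2 powr (- real N * \<xi> / 2)"
proof -
  let ?Q = "iid N p"
  let ?D = "{x :: bool list. length x = N}"
  define \<tau> where "\<tau> = 2 powr (- (real N * (ent p - \<delta>A)))"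
  define T where "T = {x :: bool list. length x = N \<and> pmf ?Q x \<le> \<tau>}"
  define Tc where "Tc = {x :: bool list. length x = N \<and> pmf ?Q x > \<tau>}"
  define \<epsilon> where "\<epsilon> = (\<Sum>x\<in>Tc. pmf ?Q x)"
  have fD: "finite ?D" by (rule finite_len)
  have fT: "finite T" and fTc: "finite Tc" unfolding T_def Tc_def by (rule finite_subset[OF _ fD], auto)+
  have fH: "finite H" and neH: "H \<noteq> {}" using tu unfolding two_universal_def by auto
  have dpos: "\<delta>A > 0" and Ns: "real N * (\<delta>A * ln 2 / 2)\<^sup>2 \<ge> 2 * (3 + log 2 (real N))"
    using exponent_bound[OF N] unfolding \<delta>A_def by auto
  have taup: "\<tau> > 0" by (simp add: \<tau>_def)
  have eps1: "\<epsilon> \<le> exp (- (2 * (3 + log 2 (real N))))"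
  proof -
    have "\<epsilon> \<le> exp (- (real N * (\<delta>A * ln 2 / 2)\<^sup>2))"
      unfolding \<epsilon>_def Tc_def \<tau>_def by (rule tail_exp[OF dpos])
    also have "\<dots> \<le> exp (- (2 * (3 + log 2 (real N))))" using Ns by simp
    finally show ?thesis .
  qed
  have epsN: "\<epsilon> \<le> 1 / real N" and eps2: "\<epsilon> \<le> 1 / 2"
    using eps1 eps_small[OF N] by linarith+
  have eps0: "\<epsilon> \<ge> 0" unfolding \<epsilon>_def by (simp add: sum_nonneg)
  define QT where "QT = (\<Sum>x\<in>T. pmf ?Q x)"
  have DTT: "?D = T \<union> Tc" and disj: "T \<inter> Tc = {}" unfolding T_def Tc_def by auto
  have "1 = (\<Sum>x\<in>?D. pmf ?Q x)" by (rule sum_pmf_eq_1[OF fD set_iid, symmetric])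
  also have "\<dots> = QT + \<epsilon>" unfolding DTT QT_def \<epsilon>_def by (rule sum.union_disjoint[OF fT fTc disj])
  finally have QT: "QT = 1 - \<epsilon>" by simp
  have QT2: "QT \<ge> 1 / 2" using QT eps2 by simp
  have mT: "measure ?Q T = QT" unfolding QT_def by (rule measure_measure_pmf_finite[OF fT])
  have ne: "set_pmf ?Q \<inter> T \<noteq> {}"
  proof
    assume e: "set_pmf ?Q \<inter> T = {}"
    have "QT = 0" unfolding QT_def
      by (rule sum.neutral) (use e in \<open>auto simp: set_pmf_iff\<close>)
    then show False using QT2 by simp
  qed
  define Q' where "Q' = cond_pmf ?Q T"
  have pQ': "\<And>x. pmf Q' x = (if x \<in> T then pmf ?Q x / QT else 0)"
    unfolding Q'_def using pmf_cond[OF ne] mT by simp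
  have sQ': "set_pmf Q' \<subseteq> ?D" unfolding Q'_def using ne by (auto simp: T_def)
  have VQQ': "vdist ?Q Q' \<le> 2 / real N"
  proof -
    have "vdist ?Q Q' = (\<Sum>x\<in>?D. \<bar>pmf ?Q x - pmf Q' x\<bar>)"
      by (rule vdist_finite[OF fD set_iid sQ'])
    also have "\<dots> = (\<Sum>x\<in>T. \<bar>pmf ?Q x - pmf Q' x\<bar>) + (\<Sum>x\<in>Tc. \<bar>pmf ?Q x - pmf Q' x\<bar>)"
      unfolding DTT by (rule sum.union_disjoint[OF fT fTc disj])
    also have "(\<Sum>x\<in>T. \<bar>pmf ?Q x - pmf Q' x\<bar>) = (\<Sum>x\<in>T. pmf ?Q x / QT - pmf ?Q x)"
    proof (rule sum.cong[OF refl])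
      fix x assume "x \<in> T"
      moreover have "pmf ?Q x \<le> pmf ?Q x / QT"
        using QT2 QT eps0 by (simp add: le_divide_eq mult_left_le)
      ultimately show "\<bar>pmf ?Q x - pmf Q' x\<bar> = pmf ?Q x / QT - pmf ?Q x" by (simp add: pQ')
    qed
    also have "\<dots> = QT / QT - QT" unfolding QT_def by (simp add: sum_subtractf sum_divide_distrib[symmetric])
    also have "(\<Sum>x\<in>Tc. \<bar>pmf ?Q x - pmf Q' x\<bar>) = \<epsilon>"
      unfolding \<epsilon>_def by (rule sum.cong[OF refl]) (use disj in \<open>auto simp: pQ'\<close>)
    also have "QT / QT - QT + \<epsilon> = 2 * \<epsilon>" using QT2 QT by simp
    finally show ?thesis using epsN by simp
  qed
  have mQ': "\<And>x. x \<in> ?D \<Longrightarrow> pmf Q' x \<le> \<tau> / QT"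
    using QT2 taup by (auto simp: pQ' T_def divide_right_mono)
  have L: "measure_pmf.expectation (pmf_of_set H) (\<lambda>g. vdist (map_pmf g Q') (unif_bits r)) \<le> sqrt (2 ^ r * (\<tau> / QT))"
    by (rule lhl[OF tu sQ' mQ'])
  have "2 ^ r * \<tau> = 2 powr (real r - real N * (ent p - \<delta>A))"
    by (simp add: \<tau>_def powr_realpow[symmetric] powr_diff powr_minus divide_inverse)
  also have "\<dots> \<le> 2 powr (- real N * \<xi>)" using r by (intro powr_mono) (auto simp: algebra_simps)
  finally have rt: "2 ^ r * \<tau> \<le> 2 powr (- real N * \<xi>)" .
  have "2 ^ r * (\<tau> / QT) \<le> 2 ^ r * (2 * \<tau>)"
    using QT2 taup by (intro mult_left_mono) (auto simp: divide_le_eq)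
  also have "\<dots> = 2 * (2 ^ r * \<tau>)" by simp
  also have "\<dots> \<le> 7 * 2 powr (- real N * \<xi>)" using rt by (smt (verit) powr_ge_zero)
  finally have "sqrt (2 ^ r * (\<tau> / QT)) \<le> sqrt (7 * 2 powr (- real N * \<xi>))" by simp
  also have "\<dots> = sqrt 7 * 2 powr (- real N * \<xi> / 2)" by (simp add: real_sqrt_mult sqrt_2_powr)
  finally have L2: "measure_pmf.expectation (pmf_of_set H) (\<lambda>g. vdist (map_pmf g Q') (unif_bits r))
       \<le> sqrt 7 * 2 powr (- real N * \<xi> / 2)" using L by linarith
  have int: "\<And>f :: _ \<Rightarrow> real. integrable (measure_pmf (pmf_of_set H)) f"
    by (rule integrable_measure_pmf_finite) (simp add: fH neH)
  have "measure_pmf.expectation (pmf_of_set H) (\<lambda>g. vdist (map_pmf g ?Q) (unif_bits r))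
      \<le> measure_pmf.expectation (pmf_of_set H) (\<lambda>g. vdist ?Q Q' + vdist (map_pmf g Q') (unif_bits r))"
  proof (rule integral_mono[OF int int])
    fix g
    have "vdist (map_pmf g ?Q) (unif_bits r) \<le> vdist (map_pmf g ?Q) (map_pmf g Q') + vdist (map_pmf g Q') (unif_bits r)"
      by (rule vdist_triangle)
    also have "\<dots> \<le> vdist ?Q Q' + vdist (map_pmf g Q') (unif_bits r)"
      using vdist_map by simp
    finally show "vdist (map_pmf g ?Q) (unif_bits r) \<le> vdist ?Q Q' + vdist (map_pmf g Q') (unif_bits r)" .
  qed
  also have "\<dots> = vdist ?Q Q' + measure_pmf.expectation (pmf_of_set H) (\<lambda>g. vdist (map_pmf g Q') (unif_bits r))"
    using int by simp
  also have "\<dots> \<le> 2 / real N + sqrt 7 * 2 powr (- real N * \<xi> / 2)"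
    using VQQ' L2 by linarith
  finally show ?thesis .
qed

lemma pair_pmf_of_set:
  assumes "finite A" "A \<noteq> {}" "finite B" "B \<noteq> {}"
  shows "pair_pmf (pmf_of_set A) (pmf_of_set B) = pmf_of_set (A \<times> B)"
proof (rule pmf_eqI)
  fix z :: "'a \<times> 'b"
  obtain a b where z: "z = (a, b)" by (cases z)
  have "A \<times> B \<noteq> {}" "finite (A \<times> B)" using assms by auto
  then show "pmf (pair_pmf (pmf_of_set A) (pmf_of_set B)) z = pmf (pmf_of_set (A \<times> B)) z"
    using assms by (simp add: z pmf_pair card_cartesian_product indicator_def)
qed

lemma ex_len: "\<exists>x :: bool list. length x = n" by (metis length_replicate)

lemma unif_append:
  "unif_bits (r + m) = bind_pmf (unif_bits r) (\<lambda>a. map_pmf (\<lambda>d. a @ d) (unif_bits m))"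
proof -
  let ?R = "{xs :: bool list. length xs = r}" and ?M = "{xs :: bool list. length xs = m}"
  have "bind_pmf (unif_bits r) (\<lambda>a. map_pmf (\<lambda>d. a @ d) (unif_bits m))
      = map_pmf (\<lambda>(a, d). a @ d) (pair_pmf (unif_bits r) (unif_bits m))"
    by (simp add: pair_pmf_def map_bind_pmf bind_map_pmf map_pmf_def[symmetric] pmf.map_comp o_def)
  also have "\<dots> = map_pmf (\<lambda>(a, d). a @ d) (pmf_of_set (?R \<times> ?M))"
    unfolding unif_bits_def by (subst pair_pmf_of_set) (auto simp: finite_len ne_len ex_len)
  also have "\<dots> = pmf_of_set ((\<lambda>(a, d). a @ d) ` (?R \<times> ?M))"
  proof (rule map_pmf_of_set_inj)
    show "inj_on (\<lambda>(a, d). a @ d) (?R \<times> ?M)" by (auto simp: inj_on_def)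
  qed (auto simp: finite_len ne_len ex_len)
  also have "(\<lambda>(a, d). a @ d) ` (?R \<times> ?M) = {xs. length xs = r + m}"
  proof
    show "{xs :: bool list. length xs = r + m} \<subseteq> (\<lambda>(a, d). a @ d) ` (?R \<times> ?M)"
    proof
      fix y :: "bool list" assume "y \<in> {xs. length xs = r + m}"
      then have "y = (\<lambda>(a, d). a @ d) (take r y, drop r y)" "(take r y, drop r y) \<in> ?R \<times> ?M" by auto
      then show "y \<in> (\<lambda>(a, d). a @ d) ` (?R \<times> ?M)" by blast
    qed
  qed auto
  finally show ?thesis by (simp add: unif_bits_def)
qed

fun chain :: "(bool list \<Rightarrow> bool list) \<Rightarrow> nat \<Rightarrow> nat \<Rightarrow> (bool list \<Rightarrow> bool list) \<Rightarrow> nat \<Rightarrow> bool list pmf" where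
  "chain e l m g 0 = map_pmf e (unif_bits l)"
| "chain e l m g (Suc n) = bind_pmf (chain e l m g n) (\<lambda>x. map_pmf (\<lambda>d. e (g x @ d)) (unif_bits m))"

lemma chain_step:
  assumes l: "l = r + m"
  shows "vdist (chain e l m g (Suc n)) (iid N p)
         \<le> vdist (map_pmf e (unif_bits l)) (iid N p) + vdist (chain e l m g n) (iid N p)
           + vdist (map_pmf g (iid N p)) (unif_bits r)"
proof -
  let ?K = "\<lambda>a. map_pmf (\<lambda>d. e (a @ d)) (unif_bits m)"
  have c: "chain e l m g (Suc n) = bind_pmf (map_pmf g (chain e l m g n)) ?K"
    by (simp add: bind_map_pmf)
  have u: "map_pmf e (unif_bits l) = bind_pmf (unif_bits r) ?K"
    unfolding l unif_append by (simp add: map_bind_pmf pmf.map_comp o_def)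
  have "vdist (chain e l m g (Suc n)) (iid N p)
      \<le> vdist (chain e l m g (Suc n)) (map_pmf e (unif_bits l)) + vdist (map_pmf e (unif_bits l)) (iid N p)"
    by (rule vdist_triangle)
  also have "vdist (chain e l m g (Suc n)) (map_pmf e (unif_bits l)) \<le> vdist (map_pmf g (chain e l m g n)) (unif_bits r)"
    unfolding c u by (rule vdist_bind_left)
  also have "\<dots> \<le> vdist (map_pmf g (chain e l m g n)) (map_pmf g (iid N p)) + vdist (map_pmf g (iid N p)) (unif_bits r)"
    by (rule vdist_triangle)
  also have "vdist (map_pmf g (chain e l m g n)) (map_pmf g (iid N p)) \<le> vdist (chain e l m g n) (iid N p)"
    by (rule vdist_map)
  finally show ?thesis by simp
qed

lemma chain_bound:
  fixes p :: "bool pmf" and H :: "(bool list \<Rightarrow> bool list) set" and N r l m :: nat and \<xi> \<delta> :: real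
  defines "\<delta>A \<equiv> log 2 11 * sqrt (2 / real N * (3 + log 2 (real N)))"
  defines "\<delta>0 \<equiv> 2 / real N + sqrt 7 * 2 powr (- real N * \<xi> / 2)"
  assumes tu: "two_universal N r H" and N: "N \<ge> 1" and \<xi>: "\<xi> > 0"
      and r: "real r \<le> real N * (ent p - \<delta>A - \<xi>)"
      and l: "l = r + m"
      and enc: "vdist (map_pmf e (unif_bits l)) (iid N p) \<le> \<delta>"
  shows "measure_pmf.expectation (pmf_of_set H) (\<lambda>g. vdist (chain e l m g n) (iid N p))
         \<le> real (Suc n) * \<delta> + real n * \<delta>0"
proof (induction n)
  case 0
  then show ?case using enc by (simp add: integral_pmf_of_set)
next
  case (Suc n)
  have fH: "finite H" and neH: "H \<noteq> {}" using tu unfolding two_universal_def by auto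
  have int: "\<And>f :: _ \<Rightarrow> real. integrable (measure_pmf (pmf_of_set H)) f"
    by (rule integrable_measure_pmf_finite) (simp add: fH neH)
  have C: "measure_pmf.expectation (pmf_of_set H) (\<lambda>g. vdist (map_pmf g (iid N p)) (unif_bits r)) \<le> \<delta>0"
    unfolding \<delta>0_def by (rule hash_const[OF tu N \<xi> r[unfolded \<delta>A_def]])
  have "measure_pmf.expectation (pmf_of_set H) (\<lambda>g. vdist (chain e l m g (Suc n)) (iid N p))
     \<le> measure_pmf.expectation (pmf_of_set H) (\<lambda>g. \<delta> + vdist (chain e l m g n) (iid N p)
           + vdist (map_pmf g (iid N p)) (unif_bits r))"
  proof (rule integral_mono[OF int int])
    fix g show "vdist (chain e l m g (Suc n)) (iid N p) \<le> \<delta> + vdist (chain e l m g n) (iid N p)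
           + vdist (map_pmf g (iid N p)) (unif_bits r)"
      using chain_step[OF l, of e g n N p] enc by linarith
  qed
  also have "\<dots> = \<delta> + measure_pmf.expectation (pmf_of_set H) (\<lambda>g. vdist (chain e l m g n) (iid N p))
      + measure_pmf.expectation (pmf_of_set H) (\<lambda>g. vdist (map_pmf g (iid N p)) (unif_bits r))"
    using int by (simp add: fH neH)
  also have "\<dots> \<le> \<delta> + (real (Suc n) * \<delta> + real n * \<delta>0) + \<delta>0"
    using Suc C by linarith
  also have "\<dots> = real (Suc (Suc n)) * \<delta> + real (Suc n) * \<delta>0" by (simp add: algebra_simps)
  finally show ?case .
qed

lemma ent_UNIV:
  fixes p :: "'a::finite pmf"
  shows "ent p = - (\<Sum>x\<in>UNIV. pmf p x * log 2 (pmf p x))"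
  unfolding ent_def
  by (intro arg_cong[where f=uminus] sum.mono_neutral_left) (auto simp: set_pmf_iff)

lemma sum_map_pmf:
  fixes p :: "'a::finite pmf" and g :: "'a \<Rightarrow> 'b::finite" and \<phi> :: "'b \<Rightarrow> real"
  shows "(\<Sum>y\<in>UNIV. pmf (map_pmf g p) y * \<phi> y) = (\<Sum>x\<in>UNIV. pmf p x * \<phi> (g x))"
proof -
  have "(\<Sum>y\<in>UNIV. pmf (map_pmf g p) y * \<phi> y) = measure_pmf.expectation (map_pmf g p) \<phi>"
    by (subst integral_measure_pmf_real[of UNIV]) (auto simp: mult.commute)
  also have "\<dots> = measure_pmf.expectation p (\<lambda>x. \<phi> (g x))" by simp
  also have "\<dots> = (\<Sum>x\<in>UNIV. pmf p x * \<phi> (g x))"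
    by (subst integral_measure_pmf_real[of UNIV]) (auto simp: mult.commute)
  finally show ?thesis .
qed

lemma pmf_map_ge:
  "pmf (map_pmf g p) (g x) \<ge> pmf p x"
proof -
  have "pmf p x = measure p {x}" by (simp add: measure_pmf_single)
  also have "\<dots> \<le> measure p (g -` {g x})" by (intro measure_pmf.finite_measure_mono) auto
  also have "\<dots> = pmf (map_pmf g p) (g x)" by (simp add: pmf_map)
  finally show ?thesis .
qed

lemma ent_subadd:
  fixes p :: "('a::finite \<times> 'b::finite) pmf"
  shows "ent p \<le> ent (map_pmf fst p) + ent (map_pmf snd p)"
proof -
  let ?f = "\<lambda>x. pmf p x"
  let ?fa = "\<lambda>a. pmf (map_pmf fst p) a"
  let ?fb = "\<lambda>b. pmf (map_pmf snd p) b"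
  have eA: "ent (map_pmf fst p) = - (\<Sum>x\<in>UNIV. ?f x * log 2 (?fa (fst x)))"
    unfolding ent_UNIV by (subst sum_map_pmf) simp
  have eB: "ent (map_pmf snd p) = - (\<Sum>x\<in>UNIV. ?f x * log 2 (?fb (snd x)))"
    unfolding ent_UNIV by (subst sum_map_pmf) simp
  have trm: "?f x * (log 2 (?f x) - log 2 (?fa (fst x)) - log 2 (?fb (snd x)))
       \<ge> - (?fa (fst x) * ?fb (snd x) - ?f x) / ln 2" for x
  proof (cases "?f x = 0")
    case True
    then show ?thesis by (simp add: divide_nonneg_pos)
  next
    case False
    then have fp: "?f x > 0" using pmf_nonneg[of p x] by linarith
    have fa: "?fa (fst x) \<ge> ?f x" using pmf_map_ge[where g=fst and p=p and x=x] by simp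
    have fb: "?fb (snd x) \<ge> ?f x" using pmf_map_ge[where g=snd and p=p and x=x] by simp
    have fap: "?fa (fst x) > 0" and fbp: "?fb (snd x) > 0" using fa fb fp by linarith+
    define y where "y = ?fa (fst x) * ?fb (snd x) / ?f x"
    have yp: "y > 0" using fap fbp fp by (simp add: y_def)
    have "log 2 (?f x) - log 2 (?fa (fst x)) - log 2 (?fb (snd x)) = - (ln y / ln 2)"
      using fp fap fbp by (simp add: y_def log_def ln_mult ln_div field_simps)
    moreover have "ln y \<le> y - 1" using yp by (rule ln_le_minus_one)
    ultimately have "log 2 (?f x) - log 2 (?fa (fst x)) - log 2 (?fb (snd x)) \<ge> - ((y - 1) / ln 2)"
      by (simp add: divide_right_mono)
    then have "?f x * (log 2 (?f x) - log 2 (?fa (fst x)) - log 2 (?fb (snd x))) \<ge> ?f x * (- ((y - 1) / ln 2))"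
      using fp by (intro mult_left_mono) auto
    also have "?f x * (- ((y - 1) / ln 2)) = - (?fa (fst x) * ?fb (snd x) - ?f x) / ln 2"
      using fp by (simp add: y_def field_simps)
    finally show ?thesis .
  qed
  have "(\<Sum>x\<in>UNIV. - (?fa (fst x) * ?fb (snd x) - ?f x) / ln 2)
      \<le> (\<Sum>x\<in>UNIV. ?f x * (log 2 (?f x) - log 2 (?fa (fst x)) - log 2 (?fb (snd x))))"
    by (rule sum_mono) (rule trm)
  also have "\<dots> = ent (map_pmf fst p) + ent (map_pmf snd p) - ent p"
    unfolding eA eB ent_UNIV[of p] by (simp add: sum_subtractf algebra_simps sum.distrib)
  finally have le: "(\<Sum>x\<in>UNIV. - (?fa (fst x) * ?fb (snd x) - ?f x) / ln 2) \<le> ent (map_pmf fst p) + ent (map_pmf snd p) - ent p" .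
  have s1: "(\<Sum>x\<in>UNIV. ?f x) = 1" by (rule sum_pmf_eq_1) auto
  have s2: "(\<Sum>x\<in>UNIV. ?fa (fst x) * ?fb (snd x)) = 1"
  proof -
    have "(\<Sum>x\<in>(UNIV :: ('a \<times> 'b) set). ?fa (fst x) * ?fb (snd x)) = (\<Sum>a\<in>UNIV. \<Sum>b\<in>UNIV. ?fa a * ?fb b)"
      unfolding UNIV_Times_UNIV[symmetric] sum.cartesian_product by (simp add: case_prod_beta)
    also have "\<dots> = (\<Sum>a\<in>UNIV. ?fa a) * (\<Sum>b\<in>UNIV. ?fb b)" by (simp add: sum_product)
    also have "\<dots> = 1" by (simp add: sum_pmf_eq_1)
    finally show ?thesis .
  qed
  have "(\<Sum>x\<in>UNIV. - (?fa (fst x) * ?fb (snd x) - ?f x) / ln 2) = - ((\<Sum>x\<in>UNIV. ?fa (fst x) * ?fb (snd x)) - (\<Sum>x\<in>UNIV. ?f x)) / ln 2"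
    by (simp add: sum_divide_distrib[symmetric] sum_subtractf sum_negf)
  also have "\<dots> = 0" using s1 s2 by simp
  finally show ?thesis using le by linarith
qed

lemma q1_marg_u: "map_pmf (\<lambda>(u,v,x,y,z). u) (q1 W qU qV qX) = qU"
  by (simp add: q1_def map_bind_pmf bind_return_pmf')
lemma q1_marg_v: "map_pmf (\<lambda>(u,v,x,y,z). v) (q1 W qU qV qX) = qV"
  by (simp add: q1_def map_bind_pmf bind_return_pmf')
lemma q1_marg_x: "map_pmf (\<lambda>(u,v,x,y,z). x) (q1 W qU qV qX) = qX"
  by (simp add: q1_def map_bind_pmf bind_return_pmf')

lemma reorder6:
  "bind_pmf A (\<lambda>x. bind_pmf E (\<lambda>e. bind_pmf B (\<lambda>u. bind_pmf F (\<lambda>d. bind_pmf C (\<lambda>v. bind_pmf G (\<lambda>f. K x e u d v f))))))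
 = bind_pmf A (\<lambda>x. bind_pmf B (\<lambda>u. bind_pmf C (\<lambda>v. bind_pmf E (\<lambda>e. bind_pmf F (\<lambda>d. bind_pmf G (\<lambda>f. K x e u d v f))))))"
proof (rule bind_pmf_cong[OF refl])
  fix x
  have "bind_pmf E (\<lambda>e. bind_pmf B (\<lambda>u. bind_pmf F (\<lambda>d. bind_pmf C (\<lambda>v. bind_pmf G (\<lambda>f. K x e u d v f)))))
      = bind_pmf B (\<lambda>u. bind_pmf E (\<lambda>e. bind_pmf F (\<lambda>d. bind_pmf C (\<lambda>v. bind_pmf G (\<lambda>f. K x e u d v f)))))"
    by (rule bind_commute_pmf)
  also have "\<dots> = bind_pmf B (\<lambda>u. bind_pmf E (\<lambda>e. bind_pmf C (\<lambda>v. bind_pmf F (\<lambda>d. bind_pmf G (\<lambda>f. K x e u d v f)))))"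
    by (intro bind_pmf_cong refl bind_commute_pmf)
  also have "\<dots> = bind_pmf B (\<lambda>u. bind_pmf C (\<lambda>v. bind_pmf E (\<lambda>e. bind_pmf F (\<lambda>d. bind_pmf G (\<lambda>f. K x e u d v f)))))"
    by (intro bind_pmf_cong refl bind_commute_pmf)
  finally show "bind_pmf E (\<lambda>e. bind_pmf B (\<lambda>u. bind_pmf F (\<lambda>d. bind_pmf C (\<lambda>v. bind_pmf G (\<lambda>f. K x e u d v f)))))
      = bind_pmf B (\<lambda>u. bind_pmf C (\<lambda>v. bind_pmf E (\<lambda>e. bind_pmf F (\<lambda>d. bind_pmf G (\<lambda>f. K x e u d v f)))))" .
qed

definition hashes :: "(bool list \<Rightarrow> bool list) set \<Rightarrow> (bool list \<Rightarrow> bool list) set \<Rightarrow> (bool list \<Rightarrow> bool list) set \<Rightarrow> hashes pmf" where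
  "hashes HX HU HV = bind_pmf (pmf_of_set HX) (\<lambda>gX. bind_pmf (pmf_of_set HU) (\<lambda>gU.
       bind_pmf (pmf_of_set HV) (\<lambda>gV. return_pmf (gX, gU, gV))))"

definition blk :: "(bool \<Rightarrow> bool \<Rightarrow> 'z pmf) \<Rightarrow>
    (bool list \<Rightarrow> bool list) \<Rightarrow> (bool list \<Rightarrow> bool list) \<Rightarrow> (bool list \<Rightarrow> bool list) \<Rightarrow>
    nat \<Rightarrow> nat \<Rightarrow> nat \<Rightarrow> nat \<Rightarrow> nat \<Rightarrow> nat \<Rightarrow> hashes \<Rightarrow> nat \<Rightarrow> 'z block pmf" where
  "blk W eX eU eV lX lU lV mX mU mV h n = (case h of (gX, gU, gV) \<Rightarrow>
     bind_pmf (chain eX lX mX gX n) (\<lambda>x. bind_pmf (chain eU lU mU gU n) (\<lambda>u.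
       bind_pmf (chain eV lV mV gV n) (\<lambda>v. finish_block W x u v))))"

lemma scheme_len:
  "(h, bs) \<in> set_pmf (scheme W eX eU eV lX lU lV mX mU mV HX HU HV n) \<Longrightarrow> length bs = n"
proof (induction n arbitrary: h bs)
  case 0 then show ?case by auto
next
  case (Suc n)
  from Suc.prems obtain h0 bs0 b where hb: "(h0, bs0) \<in> set_pmf (scheme W eX eU eV lX lU lV mX mU mV HX HU HV n)"
    and bs: "bs = bs0 @ [b]"
    by (auto split: if_splits)
  from Suc.IH[OF hb] bs show ?case by simp
qed

lemma finish_next:
  "bind_pmf (finish_block W x u v) (next_block W eX eU eV mX mU mV (gX, gU, gV))
   = bind_pmf (unif_bits mX) (\<lambda>e. bind_pmf (unif_bits mU) (\<lambda>d. bind_pmf (unif_bits mV) (\<lambda>f.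
       finish_block W (eX (gX x @ e)) (eU (gU u @ d)) (eV (gV v @ f)))))"
  unfolding finish_block_def[of W x u v] Let_def
  by (simp add: bind_assoc_pmf bind_return_pmf next_block_def)

lemma blk_Suc:
  "bind_pmf (blk W eX eU eV lX lU lV mX mU mV h n) (next_block W eX eU eV mX mU mV h)
   = blk W eX eU eV lX lU lV mX mU mV h (Suc n)"
proof -
  obtain gX gU gV where h: "h = (gX, gU, gV)" by (cases h) auto
  have "bind_pmf (blk W eX eU eV lX lU lV mX mU mV h n) (next_block W eX eU eV mX mU mV h)
     = bind_pmf (chain eX lX mX gX n) (\<lambda>x. bind_pmf (chain eU lU mU gU n) (\<lambda>u.
       bind_pmf (chain eV lV mV gV n) (\<lambda>v.
       bind_pmf (unif_bits mX) (\<lambda>e. bind_pmf (unif_bits mU) (\<lambda>d. bind_pmf (unif_bits mV) (\<lambda>f.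
       finish_block W (eX (gX x @ e)) (eU (gU u @ d)) (eV (gV v @ f))))))))"
    by (simp add: blk_def h bind_assoc_pmf finish_next)
  also have "\<dots> = bind_pmf (chain eX lX mX gX n) (\<lambda>x. bind_pmf (unif_bits mX) (\<lambda>e.
       bind_pmf (chain eU lU mU gU n) (\<lambda>u. bind_pmf (unif_bits mU) (\<lambda>d.
       bind_pmf (chain eV lV mV gV n) (\<lambda>v. bind_pmf (unif_bits mV) (\<lambda>f.
       finish_block W (eX (gX x @ e)) (eU (gU u @ d)) (eV (gV v @ f))))))))"
    by (rule reorder6[symmetric])
  also have "\<dots> = blk W eX eU eV lX lU lV mX mU mV h (Suc n)"
    by (simp add: blk_def h bind_assoc_pmf bind_map_pmf)
  finally show ?thesis .
qed


lemma scheme_last: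
  "map_pmf (\<lambda>(h, bs). (h, last bs)) (scheme W eX eU eV lX lU lV mX mU mV HX HU HV (Suc n))
   = bind_pmf (hashes HX HU HV) (\<lambda>h. map_pmf (\<lambda>b. (h, b)) (blk W eX eU eV lX lU lV mX mU mV h n))"
proof (induction n)
  case 0
  show ?case
    by (simp add: hashes_def blk_def first_block_def map_bind_pmf bind_assoc_pmf bind_return_pmf bind_map_pmf)
       (simp add: map_pmf_def)
next
  case (Suc n)
  let ?S = "scheme W eX eU eV lX lU lV mX mU mV HX HU HV"
  let ?nb = "next_block W eX eU eV mX mU mV"
  let ?blk = "blk W eX eU eV lX lU lV mX mU mV"
  have "map_pmf (\<lambda>(h, bs). (h, last bs)) (?S (Suc (Suc n)))
      = bind_pmf (?S (Suc n)) (\<lambda>(h, bs). map_pmf (\<lambda>b. (h, b)) (?nb h (last bs)))"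
    unfolding scheme.simps(2)[of _ _ _ _ _ _ _ _ _ _ _ _ _ "Suc n"] map_bind_pmf
  proof (rule bind_pmf_cong[OF refl])
    fix hb assume hb: "hb \<in> set_pmf (?S (Suc n))"
    obtain h bs where hb': "hb = (h, bs)" by (cases hb)
    have "bs \<noteq> []" using scheme_len[of h bs] hb hb' by auto
    then show "map_pmf (\<lambda>(h, bs). (h, last bs)) (case hb of (h, bs) \<Rightarrow>
          (if bs = [] then first_block W eX eU eV lX lU lV else ?nb h (last bs)) \<bind> (\<lambda>b. return_pmf (h, bs @ [b])))
        = (case hb of (h, bs) \<Rightarrow> map_pmf (\<lambda>b. (h, b)) (?nb h (last bs)))"
      by (simp add: hb' map_bind_pmf map_pmf_def[symmetric] pmf.map_comp o_def)
  qed
  also have "\<dots> = bind_pmf (map_pmf (\<lambda>(h, bs). (h, last bs)) (?S (Suc n))) (\<lambda>(h, b0). map_pmf (\<lambda>b. (h, b)) (?nb h b0))"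
    unfolding bind_map_pmf by (intro bind_pmf_cong refl) (auto split: prod.splits)
  also have "\<dots> = bind_pmf (hashes HX HU HV) (\<lambda>h. bind_pmf (?blk h n) (\<lambda>b0. map_pmf (\<lambda>b. (h, b)) (?nb h b0)))"
    unfolding Suc.IH by (simp add: bind_assoc_pmf bind_map_pmf)
  also have "\<dots> = bind_pmf (hashes HX HU HV) (\<lambda>h. map_pmf (\<lambda>b. (h, b)) (bind_pmf (?blk h n) (?nb h)))"
    by (simp add: map_bind_pmf)
  also have "\<dots> = bind_pmf (hashes HX HU HV) (\<lambda>h. map_pmf (\<lambda>b. (h, b)) (?blk h (Suc n)))"
    by (simp add: blk_Suc)
  finally show ?case .
qed

lemma scheme_nth:
  assumes "j < n"
  shows "map_pmf (\<lambda>(h, bs). bs ! j) (scheme W eX eU eV lX lU lV mX mU mV HX HU HV (Suc n))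
       = map_pmf (\<lambda>(h, bs). bs ! j) (scheme W eX eU eV lX lU lV mX mU mV HX HU HV n)"
  unfolding scheme.simps(2)[of _ _ _ _ _ _ _ _ _ _ _ _ _ n] map_bind_pmf map_pmf_def[of _ "scheme W eX eU eV lX lU lV mX mU mV HX HU HV n"]
proof (rule bind_pmf_cong[OF refl])
  fix hb assume hb: "hb \<in> set_pmf (scheme W eX eU eV lX lU lV mX mU mV HX HU HV n)"
  obtain h bs where hb': "hb = (h, bs)" by (cases hb)
  have "length bs = n" using scheme_len[of h bs] hb hb' by auto
  then show "map_pmf (\<lambda>(h, bs). bs ! j) (case hb of (h, bs) \<Rightarrow>
        (if bs = [] then first_block W eX eU eV lX lU lV else next_block W eX eU eV mX mU mV h (last bs))
          \<bind> (\<lambda>b. return_pmf (h, bs @ [b])))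
      = return_pmf (case hb of (h, bs) \<Rightarrow> bs ! j)"
    using assms by (simp add: hb' map_bind_pmf nth_append)
qed

lemma scheme_block:
  assumes "1 \<le> i" "i \<le> k"
  shows "map_pmf (\<lambda>(h, bs). bs ! (i - 1)) (scheme W eX eU eV lX lU lV mX mU mV HX HU HV k)
       = bind_pmf (hashes HX HU HV) (\<lambda>h. blk W eX eU eV lX lU lV mX mU mV h (i - 1))"
  using assms(2)
proof (induction k rule: dec_induct)
  case base
  obtain j where i: "i = Suc j" using assms(1) by (cases i) auto
  have "map_pmf (\<lambda>(h, bs). bs ! (i - 1)) (scheme W eX eU eV lX lU lV mX mU mV HX HU HV i)
      = map_pmf snd (map_pmf (\<lambda>(h, bs). (h, last bs)) (scheme W eX eU eV lX lU lV mX mU mV HX HU HV i))"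
    unfolding pmf.map_comp
  proof (rule map_pmf_cong[OF refl])
    fix hb assume hb: "hb \<in> set_pmf (scheme W eX eU eV lX lU lV mX mU mV HX HU HV i)"
    obtain h bs where hb': "hb = (h, bs)" by (cases hb)
    have "length bs = i" using scheme_len[of h bs] hb hb' by auto
    then have "bs \<noteq> []" using i by auto
    then show "(case hb of (h, bs) \<Rightarrow> bs ! (i - 1)) = (snd \<circ> (\<lambda>(h, bs). (h, last bs))) hb"
      using \<open>length bs = i\<close> by (simp add: hb' last_conv_nth)
  qed
  also have "\<dots> = bind_pmf (hashes HX HU HV) (\<lambda>h. blk W eX eU eV lX lU lV mX mU mV h (i - 1))"
    unfolding i scheme_last by (simp add: map_bind_pmf pmf.map_comp o_def)
  finally show ?case .
next
  case (step k)
  have lt: "i - 1 < k" using step.hyps assms(1) by simp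
  show ?case by (rule trans[OF scheme_nth[OF lt] step.IH])
qed

definition cons5 :: "(bool \<times> bool \<times> bool \<times> bool \<times> 'z) \<Rightarrow> 'z block \<Rightarrow> 'z block" where
  "cons5 t b = (case t of (u, v, x, y, z) \<Rightarrow> case b of (us, vs, xs, ys, zs) \<Rightarrow> (u # us, v # vs, x # xs, y # ys, z # zs))"

lemma iid_Suc': "iid (Suc n) p = bind_pmf p (\<lambda>a. bind_pmf (iid n p) (\<lambda>l. return_pmf (a # l)))"
  by (simp add: iid_def)

lemma qN_Suc: "qN (Suc n) q = bind_pmf q (\<lambda>t. bind_pmf (qN n q) (\<lambda>b. return_pmf (cons5 t b)))"
  unfolding qN_def iid_Suc'
  by (simp add: map_bind_pmf bind_map_pmf bind_assoc_pmf bind_return_pmf cons5_def split_beta)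

lemma finish_Nil: "finish_block W [] [] [] = return_pmf ([], [], [], [], [])"
  by (simp add: finish_block_def channel_def bind_return_pmf)

lemma finish_Cons:
  "finish_block W (x # xs) (u # us) (v # vs)
   = bind_pmf (W x (u \<or> v)) (\<lambda>z. bind_pmf (finish_block W xs us vs) (\<lambda>b. return_pmf (cons5 (u, v, x, u \<or> v, z) b)))"
  by (simp add: finish_block_def channel_def Let_def bind_assoc_pmf bind_return_pmf cons5_def)

lemma reorder8:
  "bind_pmf PU (\<lambda>u0. bind_pmf PV (\<lambda>v0. bind_pmf PX (\<lambda>x0. bind_pmf (Wk x0 u0 v0) (\<lambda>z0.
     bind_pmf X (\<lambda>xs. bind_pmf U (\<lambda>us. bind_pmf V (\<lambda>vs. K u0 v0 x0 z0 xs us vs)))))))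
 = bind_pmf PX (\<lambda>x0. bind_pmf X (\<lambda>xs. bind_pmf PU (\<lambda>u0. bind_pmf U (\<lambda>us.
     bind_pmf PV (\<lambda>v0. bind_pmf V (\<lambda>vs. bind_pmf (Wk x0 u0 v0) (\<lambda>z0. K u0 v0 x0 z0 xs us vs)))))))"
proof -
  have "bind_pmf PU (\<lambda>u0. bind_pmf PV (\<lambda>v0. bind_pmf PX (\<lambda>x0. bind_pmf (Wk x0 u0 v0) (\<lambda>z0.
     bind_pmf X (\<lambda>xs. bind_pmf U (\<lambda>us. bind_pmf V (\<lambda>vs. K u0 v0 x0 z0 xs us vs)))))))
   = bind_pmf PU (\<lambda>u0. bind_pmf PV (\<lambda>v0. bind_pmf PX (\<lambda>x0. bind_pmf X (\<lambda>xs. bind_pmf (Wk x0 u0 v0) (\<lambda>z0.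
     bind_pmf U (\<lambda>us. bind_pmf V (\<lambda>vs. K u0 v0 x0 z0 xs us vs)))))))"
    by (rule bind_pmf_cong[OF refl])+ (rule bind_commute_pmf)
  also have "\<dots> = bind_pmf PU (\<lambda>u0. bind_pmf PV (\<lambda>v0. bind_pmf PX (\<lambda>x0. bind_pmf X (\<lambda>xs. bind_pmf U (\<lambda>us.
     bind_pmf (Wk x0 u0 v0) (\<lambda>z0. bind_pmf V (\<lambda>vs. K u0 v0 x0 z0 xs us vs)))))))"
    by (rule bind_pmf_cong[OF refl])+ (rule bind_commute_pmf)
  also have "\<dots> = bind_pmf PU (\<lambda>u0. bind_pmf PV (\<lambda>v0. bind_pmf PX (\<lambda>x0. bind_pmf X (\<lambda>xs. bind_pmf U (\<lambda>us.
     bind_pmf V (\<lambda>vs. bind_pmf (Wk x0 u0 v0) (\<lambda>z0. K u0 v0 x0 z0 xs us vs)))))))"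
    by (rule bind_pmf_cong[OF refl])+ (rule bind_commute_pmf)
  also have "\<dots> = bind_pmf PU (\<lambda>u0. bind_pmf PX (\<lambda>x0. bind_pmf PV (\<lambda>v0. bind_pmf X (\<lambda>xs. bind_pmf U (\<lambda>us.
     bind_pmf V (\<lambda>vs. bind_pmf (Wk x0 u0 v0) (\<lambda>z0. K u0 v0 x0 z0 xs us vs)))))))"
    by (rule bind_pmf_cong[OF refl])+ (rule bind_commute_pmf)
  also have "\<dots> = bind_pmf PX (\<lambda>x0. bind_pmf PU (\<lambda>u0. bind_pmf PV (\<lambda>v0. bind_pmf X (\<lambda>xs. bind_pmf U (\<lambda>us.
     bind_pmf V (\<lambda>vs. bind_pmf (Wk x0 u0 v0) (\<lambda>z0. K u0 v0 x0 z0 xs us vs)))))))"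
    by (rule bind_commute_pmf)
  also have "\<dots> = bind_pmf PX (\<lambda>x0. bind_pmf PU (\<lambda>u0. bind_pmf X (\<lambda>xs. bind_pmf PV (\<lambda>v0. bind_pmf U (\<lambda>us.
     bind_pmf V (\<lambda>vs. bind_pmf (Wk x0 u0 v0) (\<lambda>z0. K u0 v0 x0 z0 xs us vs)))))))"
    by (rule bind_pmf_cong[OF refl])+ (rule bind_commute_pmf)
  also have "\<dots> = bind_pmf PX (\<lambda>x0. bind_pmf X (\<lambda>xs. bind_pmf PU (\<lambda>u0. bind_pmf PV (\<lambda>v0. bind_pmf U (\<lambda>us.
     bind_pmf V (\<lambda>vs. bind_pmf (Wk x0 u0 v0) (\<lambda>z0. K u0 v0 x0 z0 xs us vs)))))))"
    by (rule bind_pmf_cong[OF refl])+ (rule bind_commute_pmf)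
  also have "\<dots> = bind_pmf PX (\<lambda>x0. bind_pmf X (\<lambda>xs. bind_pmf PU (\<lambda>u0. bind_pmf U (\<lambda>us. bind_pmf PV (\<lambda>v0.
     bind_pmf V (\<lambda>vs. bind_pmf (Wk x0 u0 v0) (\<lambda>z0. K u0 v0 x0 z0 xs us vs)))))))"
    by (rule bind_pmf_cong[OF refl])+ (rule bind_commute_pmf)
  finally show ?thesis .
qed

lemma qN_decomp:
  "qN N (q1 W qU qV qX) = bind_pmf (iid N qX) (\<lambda>x. bind_pmf (iid N qU) (\<lambda>u.
       bind_pmf (iid N qV) (\<lambda>v. finish_block W x u v)))"
proof (induction N)
  case 0
  show ?case by (simp add: qN_def iid_0 finish_Nil bind_return_pmf)
next
  case (Suc n)
  let ?K = "\<lambda>u0 v0 x0 z0 xs us vs. bind_pmf (finish_block W xs us vs) (\<lambda>b. return_pmf (cons5 (u0, v0, x0, u0 \<or> v0, z0) b))"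
  have "qN (Suc n) (q1 W qU qV qX)
     = bind_pmf qU (\<lambda>u0. bind_pmf qV (\<lambda>v0. bind_pmf qX (\<lambda>x0. bind_pmf (W x0 (u0 \<or> v0)) (\<lambda>z0.
       bind_pmf (iid n qX) (\<lambda>xs. bind_pmf (iid n qU) (\<lambda>us. bind_pmf (iid n qV) (\<lambda>vs. ?K u0 v0 x0 z0 xs us vs)))))))"
    unfolding qN_Suc Suc.IH by (simp add: q1_def bind_assoc_pmf bind_return_pmf)
  also have "\<dots> = bind_pmf qX (\<lambda>x0. bind_pmf (iid n qX) (\<lambda>xs. bind_pmf qU (\<lambda>u0. bind_pmf (iid n qU) (\<lambda>us.
     bind_pmf qV (\<lambda>v0. bind_pmf (iid n qV) (\<lambda>vs. bind_pmf (W x0 (u0 \<or> v0)) (\<lambda>z0. ?K u0 v0 x0 z0 xs us vs)))))))"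
    by (rule reorder8[where Wk = "\<lambda>x0 u0 v0. W x0 (u0 \<or> v0)"])
  also have "\<dots> = bind_pmf (iid (Suc n) qX) (\<lambda>x. bind_pmf (iid (Suc n) qU) (\<lambda>u.
       bind_pmf (iid (Suc n) qV) (\<lambda>v. finish_block W x u v)))"
    unfolding iid_Suc' by (simp add: bind_assoc_pmf bind_return_pmf finish_Cons)
  finally show ?case .
qed

theorem lemma3:
  fixes W :: "bool \<Rightarrow> bool \<Rightarrow> ('z::finite) pmf"
    and qU qV qX :: "bool pmf"
    and N k i :: nat and \<xi> \<delta> :: real
    and rX rU rV lX lU lV mX mU mV :: nat
    and HX HU HV :: "(bool list \<Rightarrow> bool list) set"
    and eX eU eV :: "bool list \<Rightarrow> bool list"
  defines "q \<equiv> q1 W qU qV qX"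
  defines "HXgUZ \<equiv> ent (map_pmf (\<lambda>(u,v,x,y,z). (x,u,z)) q) - ent (map_pmf (\<lambda>(u,v,x,y,z). (u,z)) q)"
      and "HUgZ \<equiv> ent (map_pmf (\<lambda>(u,v,x,y,z). (u,z)) q) - ent (map_pmf (\<lambda>(u,v,x,y,z). z) q)"
      and "HVgUZX \<equiv> ent (map_pmf (\<lambda>(u,v,x,y,z). (v,u,z,x)) q) - ent (map_pmf (\<lambda>(u,v,x,y,z). (u,z,x)) q)"
      and "IX_UZ \<equiv> ent (map_pmf (\<lambda>(u,v,x,y,z). x) q) + ent (map_pmf (\<lambda>(u,v,x,y,z). (u,z)) q)
                    - ent (map_pmf (\<lambda>(u,v,x,y,z). (x,u,z)) q)"
      and "IU_Z \<equiv> ent (map_pmf (\<lambda>(u,v,x,y,z). u) q) + ent (map_pmf (\<lambda>(u,v,x,y,z). z) q)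
                    - ent (map_pmf (\<lambda>(u,v,x,y,z). (u,z)) q)"
      and "IV_UZX \<equiv> ent (map_pmf (\<lambda>(u,v,x,y,z). v) q) + ent (map_pmf (\<lambda>(u,v,x,y,z). (u,z,x)) q)
                    - ent (map_pmf (\<lambda>(u,v,x,y,z). (v,u,z,x)) q)"
  defines "\<delta>A \<equiv> log 2 11 * sqrt (2 / real N * (3 + log 2 (real N)))"
  defines "\<epsilon>1 \<equiv> 2 * (\<delta>A + \<xi>)"
      and "\<delta>0 \<equiv> 2 / real N + sqrt 7 * 2 powr (- real N * \<xi> / 2)"
  assumes "N \<ge> 1" and "\<xi> > 0"
      and "real rX = real N * (HXgUZ - \<epsilon>1 / 2)"
      and "real rU = real N * (HUgZ - \<epsilon>1 / 2)"
      and "real rV = real N * (HVgUZX - \<epsilon>1 / 2)"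
      and "real lX = real N * (ent qX + \<epsilon>1 / 2)"
      and "real lU = real N * (ent qU + \<epsilon>1 / 2)"
      and "real lV = real N * (ent qV + \<epsilon>1 / 2)"
      and "real mX = real N * (IX_UZ + \<epsilon>1)"
      and "real mU = real N * (IU_Z + \<epsilon>1)"
      and "real mV = real N * (IV_UZX + \<epsilon>1)"
      and "two_universal N rX HX" and "two_universal N rU HU" and "two_universal N rV HV"
      and "\<forall>s. length s = lX \<longrightarrow> length (eX s) = N"
      and "\<forall>s. length s = lU \<longrightarrow> length (eU s) = N"
      and "\<forall>s. length s = lV \<longrightarrow> length (eV s) = N"
      and "vdist (map_pmf eX (unif_bits lX)) (iid N qX) \<le> \<delta>"
      and "vdist (map_pmf eU (unif_bits lU)) (iid N qU) \<le> \<delta>"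
      and "vdist (map_pmf eV (unif_bits lV)) (iid N qV) \<le> \<delta>"
      and "1 \<le> i" and "i \<le> k"
  shows "vdist (map_pmf (\<lambda>(h, bs). bs ! (i - 1)) (scheme W eX eU eV lX lU lV mX mU mV HX HU HV k))
               (qN N q)
         \<le> 3 / 2 * (\<delta> + \<delta>0) * (3 ^ i - 1) + 3 ^ (i + 1) * \<delta>"
proof -
  let ?E = "\<lambda>f. ent (map_pmf f q)"
  have mx: "?E (\<lambda>(u,v,x,y,z). x) = ent qX" unfolding q_def by (simp add: q1_marg_x)
  have mu: "?E (\<lambda>(u,v,x,y,z). u) = ent qU" unfolding q_def by (simp add: q1_marg_u)
  have mv: "?E (\<lambda>(u,v,x,y,z). v) = ent qV" unfolding q_def by (simp add: q1_marg_v)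
  have saX: "?E (\<lambda>(u,v,x,y,z). (x,u,z)) \<le> ?E (\<lambda>(u,v,x,y,z). x) + ?E (\<lambda>(u,v,x,y,z). (u,z))"
    using ent_subadd[of "map_pmf (\<lambda>(u,v,x,y,z). (x,u,z)) q"] by (simp add: pmf.map_comp o_def split_beta split_beta')
  have saU: "?E (\<lambda>(u,v,x,y,z). (u,z)) \<le> ?E (\<lambda>(u,v,x,y,z). u) + ?E (\<lambda>(u,v,x,y,z). z)"
    using ent_subadd[of "map_pmf (\<lambda>(u,v,x,y,z). (u,z)) q"] by (simp add: pmf.map_comp o_def split_beta split_beta')
  have saV: "?E (\<lambda>(u,v,x,y,z). (v,u,z,x)) \<le> ?E (\<lambda>(u,v,x,y,z). v) + ?E (\<lambda>(u,v,x,y,z). (u,z,x))"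
    using ent_subadd[of "map_pmf (\<lambda>(u,v,x,y,z). (v,u,z,x)) q"] by (simp add: pmf.map_comp o_def split_beta split_beta')
  have N0: "real N \<ge> 0" by simp
  have e1: "\<epsilon>1 / 2 = \<delta>A + \<xi>" by (simp add: \<epsilon>1_def)
  have rX: "real rX \<le> real N * (ent qX - \<delta>A - \<xi>)"
  proof -
    have "HXgUZ - \<epsilon>1 / 2 \<le> ent qX - \<delta>A - \<xi>" using saX mx e1 unfolding HXgUZ_def by linarith
    then show ?thesis using assms(13) by (simp add: mult_left_mono)
  qed
  have rU: "real rU \<le> real N * (ent qU - \<delta>A - \<xi>)"
  proof -
    have "HUgZ - \<epsilon>1 / 2 \<le> ent qU - \<delta>A - \<xi>" using saU mu e1 unfolding HUgZ_def by linarith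
    then show ?thesis using assms(14) by (simp add: mult_left_mono)
  qed
  have rV: "real rV \<le> real N * (ent qV - \<delta>A - \<xi>)"
  proof -
    have "HVgUZX - \<epsilon>1 / 2 \<le> ent qV - \<delta>A - \<xi>" using saV mv e1 unfolding HVgUZX_def by linarith
    then show ?thesis using assms(15) by (simp add: mult_left_mono)
  qed
  have lX: "lX = rX + mX"
  proof -
    have "HXgUZ + IX_UZ = ent qX" using mx unfolding HXgUZ_def IX_UZ_def by linarith
    then have "ent qX + \<epsilon>1 / 2 = (HXgUZ - \<epsilon>1 / 2) + (IX_UZ + \<epsilon>1)" by linarith
    then have "real N * (ent qX + \<epsilon>1 / 2) = real N * (HXgUZ - \<epsilon>1 / 2) + real N * (IX_UZ + \<epsilon>1)"
      by (simp add: distrib_left[symmetric])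
    then have "real lX = real rX + real mX" using assms(13,16,19) by linarith
    then show ?thesis by linarith
  qed
  have lU: "lU = rU + mU"
  proof -
    have "HUgZ + IU_Z = ent qU" using mu unfolding HUgZ_def IU_Z_def by linarith
    then have "ent qU + \<epsilon>1 / 2 = (HUgZ - \<epsilon>1 / 2) + (IU_Z + \<epsilon>1)" by linarith
    then have "real N * (ent qU + \<epsilon>1 / 2) = real N * (HUgZ - \<epsilon>1 / 2) + real N * (IU_Z + \<epsilon>1)"
      by (simp add: distrib_left[symmetric])
    then have "real lU = real rU + real mU" using assms(14,17,20) by linarith
    then show ?thesis by linarith
  qed
  have lV: "lV = rV + mV"
  proof -
    have "HVgUZX + IV_UZX = ent qV" using mv unfolding HVgUZX_def IV_UZX_def by linarith
    then have "ent qV + \<epsilon>1 / 2 = (HVgUZX - \<epsilon>1 / 2) + (IV_UZX + \<epsilon>1)" by linarith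
    then have "real N * (ent qV + \<epsilon>1 / 2) = real N * (HVgUZX - \<epsilon>1 / 2) + real N * (IV_UZX + \<epsilon>1)"
      by (simp add: distrib_left[symmetric])
    then have "real lV = real rV + real mV" using assms(15,18,21) by linarith
    then show ?thesis by linarith
  qed
  define aX where "aX = (\<lambda>g. vdist (chain eX lX mX g (i - 1)) (iid N qX))"
  define aU where "aU = (\<lambda>g. vdist (chain eU lU mU g (i - 1)) (iid N qU))"
  define aV where "aV = (\<lambda>g. vdist (chain eV lV mV g (i - 1)) (iid N qV))"
  let ?B = "real (Suc (i - 1)) * \<delta> + real (i - 1) * \<delta>0"
  have cX: "measure_pmf.expectation (pmf_of_set HX) aX \<le> ?B"
    unfolding aX_def \<delta>0_def
    by (rule chain_bound[OF assms(22) assms(11) assms(12) rX[unfolded \<delta>A_def] lX assms(28)])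
  have cU: "measure_pmf.expectation (pmf_of_set HU) aU \<le> ?B"
    unfolding aU_def \<delta>0_def
    by (rule chain_bound[OF assms(23) assms(11) assms(12) rU[unfolded \<delta>A_def] lU assms(29)])
  have cV: "measure_pmf.expectation (pmf_of_set HV) aV \<le> ?B"
    unfolding aV_def \<delta>0_def
    by (rule chain_bound[OF assms(24) assms(11) assms(12) rV[unfolded \<delta>A_def] lV assms(30)])
  have fin: "finite HX" "HX \<noteq> {}" "finite HU" "HU \<noteq> {}" "finite HV" "HV \<noteq> {}"
    using assms(22-24) unfolding two_universal_def by auto
  have intX: "\<And>f :: _ \<Rightarrow> real. integrable (measure_pmf (pmf_of_set HX)) f"
    by (rule integrable_measure_pmf_finite) (simp add: fin)
  have intU: "\<And>f :: _ \<Rightarrow> real. integrable (measure_pmf (pmf_of_set HU)) f"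
    by (rule integrable_measure_pmf_finite) (simp add: fin)
  have intV: "\<And>f :: _ \<Rightarrow> real. integrable (measure_pmf (pmf_of_set HV)) f"
    by (rule integrable_measure_pmf_finite) (simp add: fin)
  let ?blk = "blk W eX eU eV lX lU lV mX mU mV"
  have per: "vdist (?blk (gX, gU, gV) (i - 1)) (qN N q) \<le> aX gX + aU gU + aV gV" for gX gU gV
  proof -
    have "vdist (?blk (gX, gU, gV) (i - 1)) (qN N q) \<le> aX gX + (aU gU + aV gV)"
      unfolding blk_def q_def qN_decomp aX_def aU_def aV_def
      by simp (rule vdist_bind3)
    then show ?thesis by simp
  qed
  have hq: "qN N q = bind_pmf (pmf_of_set HX) (\<lambda>gX. bind_pmf (pmf_of_set HU) (\<lambda>gU.
        bind_pmf (pmf_of_set HV) (\<lambda>gV. qN N q)))" by simp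
  have hb: "bind_pmf (hashes HX HU HV) (\<lambda>h. ?blk h (i - 1))
      = bind_pmf (pmf_of_set HX) (\<lambda>gX. bind_pmf (pmf_of_set HU) (\<lambda>gU.
        bind_pmf (pmf_of_set HV) (\<lambda>gV. ?blk (gX, gU, gV) (i - 1))))"
    by (simp add: hashes_def bind_assoc_pmf bind_return_pmf)
  have "vdist (map_pmf (\<lambda>(h, bs). bs ! (i - 1)) (scheme W eX eU eV lX lU lV mX mU mV HX HU HV k)) (qN N q)
      = vdist (bind_pmf (pmf_of_set HX) (\<lambda>gX. bind_pmf (pmf_of_set HU) (\<lambda>gU.
        bind_pmf (pmf_of_set HV) (\<lambda>gV. ?blk (gX, gU, gV) (i - 1)))))
        (bind_pmf (pmf_of_set HX) (\<lambda>gX. bind_pmf (pmf_of_set HU) (\<lambda>gU.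
        bind_pmf (pmf_of_set HV) (\<lambda>gV. qN N q))))"
    unfolding scheme_block[OF assms(31,32)] hb by simp
  also have "\<dots> \<le> measure_pmf.expectation (pmf_of_set HX) (\<lambda>gX. vdist
        (bind_pmf (pmf_of_set HU) (\<lambda>gU. bind_pmf (pmf_of_set HV) (\<lambda>gV. ?blk (gX, gU, gV) (i - 1))))
        (bind_pmf (pmf_of_set HU) (\<lambda>gU. bind_pmf (pmf_of_set HV) (\<lambda>gV. qN N q))))"
    by (rule vdist_bind_right)
  also have "\<dots> \<le> measure_pmf.expectation (pmf_of_set HX) (\<lambda>gX. aX gX
        + measure_pmf.expectation (pmf_of_set HU) aU + measure_pmf.expectation (pmf_of_set HV) aV)"
  proof (rule integral_mono[OF intX intX])
    fix gX
    have "vdist (bind_pmf (pmf_of_set HU) (\<lambda>gU. bind_pmf (pmf_of_set HV) (\<lambda>gV. ?blk (gX, gU, gV) (i - 1))))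
        (bind_pmf (pmf_of_set HU) (\<lambda>gU. bind_pmf (pmf_of_set HV) (\<lambda>gV. qN N q)))
      \<le> measure_pmf.expectation (pmf_of_set HU) (\<lambda>gU. vdist
          (bind_pmf (pmf_of_set HV) (\<lambda>gV. ?blk (gX, gU, gV) (i - 1)))
          (bind_pmf (pmf_of_set HV) (\<lambda>gV. qN N q)))"
      by (rule vdist_bind_right)
    also have "\<dots> \<le> measure_pmf.expectation (pmf_of_set HU) (\<lambda>gU. aX gX + aU gU
          + measure_pmf.expectation (pmf_of_set HV) aV)"
    proof (rule integral_mono[OF intU intU])
      fix gU
      have "vdist (bind_pmf (pmf_of_set HV) (\<lambda>gV. ?blk (gX, gU, gV) (i - 1)))
          (bind_pmf (pmf_of_set HV) (\<lambda>gV. qN N q))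
        \<le> measure_pmf.expectation (pmf_of_set HV) (\<lambda>gV. vdist (?blk (gX, gU, gV) (i - 1)) (qN N q))"
        by (rule vdist_bind_right)
      also have "\<dots> \<le> measure_pmf.expectation (pmf_of_set HV) (\<lambda>gV. aX gX + aU gU + aV gV)"
        by (rule integral_mono[OF intV intV]) (rule per)
      also have "\<dots> = aX gX + aU gU + measure_pmf.expectation (pmf_of_set HV) aV"
        using intV by simp
      finally show "vdist (bind_pmf (pmf_of_set HV) (\<lambda>gV. ?blk (gX, gU, gV) (i - 1)))
          (bind_pmf (pmf_of_set HV) (\<lambda>gV. qN N q))
        \<le> aX gX + aU gU + measure_pmf.expectation (pmf_of_set HV) aV" .
    qed
    also have "\<dots> = aX gX + measure_pmf.expectation (pmf_of_set HU) aU + measure_pmf.expectation (pmf_of_set HV) aV"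
      using intU by simp
    finally show "vdist (bind_pmf (pmf_of_set HU) (\<lambda>gU. bind_pmf (pmf_of_set HV) (\<lambda>gV. ?blk (gX, gU, gV) (i - 1))))
        (bind_pmf (pmf_of_set HU) (\<lambda>gU. bind_pmf (pmf_of_set HV) (\<lambda>gV. qN N q)))
      \<le> aX gX + measure_pmf.expectation (pmf_of_set HU) aU + measure_pmf.expectation (pmf_of_set HV) aV" .
  qed
  also have "\<dots> = measure_pmf.expectation (pmf_of_set HX) aX + measure_pmf.expectation (pmf_of_set HU) aU
        + measure_pmf.expectation (pmf_of_set HV) aV"
    using intX by simp
  also have "\<dots> \<le> ?B + ?B + ?B" by (rule add_mono[OF add_mono[OF cX cU] cV])
  also have "\<dots> = 3 * ?B" by simp
  also have "\<dots> \<le> 3 / 2 * (\<delta> + \<delta>0) * (3 ^ i - 1) + 3 ^ (i + 1) * \<delta>"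
  proof -
    have d: "\<delta> \<ge> 0" using vdist_nonneg assms(28) order_trans by blast
    have d0: "\<delta>0 \<ge> 0" unfolding \<delta>0_def by simp
    have p3: "2 * real n \<le> 3 ^ n + 1" for n :: nat
    proof (induction n)
      case 0 then show ?case by simp
    next
      case (Suc n)
      have h1: "(1::real) \<le> 3 ^ n" by simp
      have "2 * real (Suc n) = 2 * real n + 2" by simp
      also have "\<dots> \<le> 3 ^ n + 3" using Suc.IH by linarith
      also have "\<dots> \<le> 3 ^ Suc n + 1" using h1 by simp
      finally show ?case .
    qed
    have i1: "real (Suc (i - 1)) = real i" and i2: "real (i - 1) = real i - 1" using assms(31) by auto
    have a: "3 * (real i - 1) \<le> 3 / 2 * (3 ^ i - 1)" using p3[of i] by simp
    have b: "3 * real i \<le> 3 / 2 * (3 ^ i - 1) + 3 ^ (i + 1)"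
    proof -
      have h1: "(1::real) \<le> 3 ^ i" by simp
      have h2: "(3::real) ^ (i + 1) = 3 * 3 ^ i" by simp
      have h3: "3 / 2 * ((3::real) ^ i - 1) + 3 * 3 ^ i = 9 / 2 * 3 ^ i - 3 / 2" by (simp add: field_simps)
      show ?thesis unfolding h2 h3 using p3[of i] h1 by linarith
    qed
    have "3 * ?B = (3 * real i) * \<delta> + (3 * (real i - 1)) * \<delta>0" unfolding i1 i2 by (simp add: algebra_simps)
    also have "\<dots> \<le> (3 / 2 * (3 ^ i - 1) + 3 ^ (i + 1)) * \<delta> + (3 / 2 * (3 ^ i - 1)) * \<delta>0"
      using a b d d0 by (intro add_mono mult_right_mono) auto
    also have "\<dots> = 3 / 2 * (\<delta> + \<delta>0) * (3 ^ i - 1) + 3 ^ (i + 1) * \<delta>" by (simp add: field_simps)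
    finally show ?thesis .
  qed
  finally show ?thesis .
qed

end
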